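(* Let $\{Z_n\}_{n\ge0}$ be the $d$-dimensional branching random walk described in the context, with $d\ge1$ and offspring mean $m\le1$. Then there exists a function $F_d(r)\in[0,+\infty]$ such that for every $r>0$, $$\lim_{n\to\infty}\mathbb{P}(R_n\ge r)=e^{-F_d(r)}\in[0,1].$$
   Context: Let $\{p_k\}_{k\ge0}$ be an offspring distribution on $\{0,1,2,\dots\}$ with $p_0<1$, $p_1<1$ and mean $m=\sum_k kp_k$. Let $X$ be an $\mathbb{R}^d$-valued random vector (the displacement) with mean zero whose components are i.i.d. The branching random walk $\{Z_n\}_{n\ge0}$: $Z_0$ is a Poisson random measure on $\mathbb{R}^d$ with Lebesgue intensity (law $\mathbb{P}$); at each generation every particle independently is replaced by a random number of children with law $\{p_k\}$, each child independently displaced from its parent's position by an independent copy of $X$; $Z_n$ is the counting measure of particle positions at generation $n$. Let $B(u)=\{x\in\mathbb{R}^d:|x|<u\}$ and $R_n:=\sup\{u>0:Z_n(B(u))=0\}$ (with $\sup\emptyset=0$); by convention $e^{-\infty}=0$. *)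

theory Defs
  imports "HOL-Probability.Probability"
begin

text \<open>Ulam--Harris construction of the branching random walk started from a Poisson
random measure of Lebesgue intensity on the d-dimensional space (index type 'd).
The space is cut into the unit cubes indexed by k :: int^'d.  An outcome consists of
  N k               : number of initial particles in cube k (Poisson with mean 1),
  xi (k,j,w)        : number of children of the individual w (a word in nat list)
                      descending from the j-th initial particle of cube k (law p),
  U (k,j,i)         : i-th coordinate of the position of the j-th initial particle
                      of cube k (uniform on the i-th side of the cube),
  D (k,j,w,i)       : i-th coordinate of the displacement of individual w from its
                      parent (law mu; coordinates i.i.d.).\<close>

type_synonym 'd brw_outcome =
  "(int^'d \<Rightarrow> nat) \<times> (((int^'d) \<times> nat \<times> nat list) \<Rightarrow> nat) \<times>
   (((int^'d) \<times> nat \<times> 'd) \<Rightarrow> real) \<times> (((int^'d) \<times> nat \<times> nat list \<times> 'd) \<Rightarrow> real)"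

definition brw_space ::
  "nat pmf \<Rightarrow> real measure \<Rightarrow> ('d::finite) brw_outcome measure" where
  "brw_space p \<mu> =
     (\<Pi>\<^sub>M k\<in>UNIV. measure_pmf (poisson_pmf 1)) \<Otimes>\<^sub>M
     ((\<Pi>\<^sub>M a\<in>UNIV. measure_pmf p) \<Otimes>\<^sub>M
      ((\<Pi>\<^sub>M a\<in>UNIV. (case a of (k, j, i) \<Rightarrow>
            uniform_measure lborel {real_of_int (k$i) ..< real_of_int (k$i) + 1})) \<Otimes>\<^sub>M
       (\<Pi>\<^sub>M a\<in>UNIV. \<mu>)))"

definition brw_alive :: "('d::finite) brw_outcome \<Rightarrow> int^'d \<Rightarrow> nat \<Rightarrow> nat list \<Rightarrow> bool" where
  "brw_alive \<omega> k j w \<longleftrightarrow>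
     (case \<omega> of (N, xi, U, D) \<Rightarrow>
        j < N k \<and> (\<forall>t < length w. w ! t < xi (k, j, take t w)))"

definition brw_pos :: "('d::finite) brw_outcome \<Rightarrow> int^'d \<Rightarrow> nat \<Rightarrow> nat list \<Rightarrow> real^'d" where
  "brw_pos \<omega> k j w =
     (case \<omega> of (N, xi, U, D) \<Rightarrow>
        (\<chi> i. U (k, j, i)) + (\<Sum>t\<in>{1..length w}. (\<chi> i. D (k, j, take t w, i))))"

definition brw_Z :: "nat \<Rightarrow> ('d::finite) brw_outcome \<Rightarrow> (real^'d) set \<Rightarrow> enat" where
  "brw_Z n \<omega> B =
     (let S = {(k, j, w). brw_alive \<omega> k j w \<and> length w = n \<and> brw_pos \<omega> k j w \<in> B}
      in if finite S then enat (card S) else \<infinity>)"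

definition brw_R :: "nat \<Rightarrow> ('d::finite) brw_outcome \<Rightarrow> ereal" where
  "brw_R n \<omega> = Sup ({0} \<union> {ereal u | u. u > 0 \<and> brw_Z n \<omega> (ball 0 u) = 0})"

definition exp_neg_ennreal :: "ennreal \<Rightarrow> real" where
  "exp_neg_ennreal x = (if x = \<infinity> then 0 else exp (- enn2real x))"

end

theory Submission
  imports Defs
begin

type_synonym 'd tatom = "nat list + (nat list \<times> 'd)"
type_synonym 'd fatom = "'d + 'd tatom"
type_synonym 'd atom = "(int^'d) + (((int^'d) \<times> nat) \<times> 'd fatom)"

definition PR :: "nat pmf \<Rightarrow> real measure" where "PR q = distr (measure_pmf q) borel real"
definition unif :: "real \<Rightarrow> real measure" where "unif a = uniform_measure lborel {a..<a+1}"
definition nuT :: "nat pmf \<Rightarrow> real measure \<Rightarrow> 'd tatom \<Rightarrow> real measure" where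
  "nuT p \<mu> b = (case b of Inl _ \<Rightarrow> PR p | Inr _ \<Rightarrow> \<mu>)"
definition nuF :: "nat pmf \<Rightarrow> real measure \<Rightarrow> int^'d \<Rightarrow> 'd fatom \<Rightarrow> real measure" where
  "nuF p \<mu> k a = (case a of Inl i \<Rightarrow> unif (real_of_int (k$i)) | Inr b \<Rightarrow> nuT p \<mu> b)"
definition nu :: "nat pmf \<Rightarrow> real measure \<Rightarrow> ('d::finite) atom \<Rightarrow> real measure" where
  "nu p \<mu> a = (case a of Inl k \<Rightarrow> PR (poisson_pmf 1) | Inr ((k,j),b) \<Rightarrow> nuF p \<mu> k b)"

lemma prob_PR: "prob_space (PR q)"
  unfolding PR_def by (rule prob_space.prob_space_distr) (auto simp: measure_pmf.prob_space_axioms)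

lemma sets_PR[simp]: "sets (PR q) = sets borel" by (simp add: PR_def)

lemma prob_unif: "prob_space (unif a)"
  unfolding unif_def by (rule prob_space_uniform_measure) auto

lemma sets_unif[simp]: "sets (unif a) = sets borel" by (simp add: unif_def)



definition txi :: "('d tatom \<Rightarrow> real) \<Rightarrow> nat list \<Rightarrow> nat" where "txi t w = nat \<lfloor>t (Inl w)\<rfloor>"
definition talive :: "('d tatom \<Rightarrow> real) \<Rightarrow> nat list \<Rightarrow> bool" where
  "talive t w \<longleftrightarrow> (\<forall>i<length w. w!i < txi t (take i w))"
definition disp :: "('d tatom \<Rightarrow> real) \<Rightarrow> nat list \<Rightarrow> 'd \<Rightarrow> real" where
  "disp t w i = (\<Sum>s\<in>{1..length w}. t (Inr (take s w, i)))"
definition inball :: "real \<Rightarrow> ('d::finite \<Rightarrow> real) \<Rightarrow> bool" where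
  "inball r v \<longleftrightarrow> (\<Sum>i\<in>UNIV. (v i)^2) < r^2"
definition hit :: "nat \<Rightarrow> real \<Rightarrow> (('d::finite) tatom \<Rightarrow> real) \<Rightarrow> ('d \<Rightarrow> real) \<Rightarrow> bool" where
  "hit n r t x \<longleftrightarrow> (\<exists>w. length w = n \<and> talive t w \<and> inball r (\<lambda>i. x i + disp t w i))"

definition Leb :: "('d::finite \<Rightarrow> real) measure" where "Leb = PiM UNIV (\<lambda>_. lborel)"

lemma meas_borel_cong: "f \<in> M \<rightarrow>\<^sub>M N \<Longrightarrow> sets N = sets borel \<Longrightarrow> f \<in> borel_measurable M"
  using measurable_cong_sets[of M M N borel] by auto

lemma meas_txi:
  assumes [measurable]: "f \<in> M \<rightarrow>\<^sub>M PiM UNIV N" "sets (N (Inl w)) = sets borel"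
  shows "(\<lambda>x. txi (f x) w) \<in> M \<rightarrow>\<^sub>M count_space UNIV"
proof -
  have "(\<lambda>x. f x (Inl w)) \<in> M \<rightarrow>\<^sub>M N (Inl w)" by measurable
  then have [measurable]: "(\<lambda>x. f x (Inl w)) \<in> borel_measurable M" using assms(2) by (rule meas_borel_cong)
  show ?thesis unfolding txi_def by measurable
qed

lemma meas_hit:
  fixes N :: "('d::finite) tatom \<Rightarrow> real measure"
  assumes [measurable]: "f \<in> M \<rightarrow>\<^sub>M PiM UNIV N" "g \<in> M \<rightarrow>\<^sub>M Leb" "\<And>b. sets (N b) = sets borel"
  shows "Measurable.pred M (\<lambda>x. hit n r (f x) (g x))"
proof -
  have c[measurable]: "(\<lambda>x. f x b) \<in> borel_measurable M" for b
  proof -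
    have "(\<lambda>x. f x b) \<in> M \<rightarrow>\<^sub>M N b" by measurable
    then show ?thesis using assms(3) by (rule meas_borel_cong)
  qed
  have g[measurable]: "(\<lambda>x. g x i) \<in> borel_measurable M" for i
  proof -
    have "(\<lambda>x. g x i) \<in> M \<rightarrow>\<^sub>M lborel" using assms(2) unfolding Leb_def by measurable
    then show ?thesis by (rule meas_borel_cong) simp
  qed
  have t[measurable]: "Measurable.pred M (\<lambda>x. talive (f x) w)" for w
    unfolding talive_def txi_def by measurable
  have d[measurable]: "(\<lambda>x. disp (f x) w i) \<in> borel_measurable M" for w i
    unfolding disp_def by measurable
  have b[measurable]: "Measurable.pred M (\<lambda>x. inball r (\<lambda>i. g x i + disp (f x) w i))" for w
    unfolding inball_def by measurable
  show ?thesis unfolding hit_def by measurable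
qed



lemma pps_UNIV:
  assumes "\<And>i. prob_space (M i)"
  shows "product_prob_space M"
  using assms by (simp add: product_prob_space_def product_prob_space_axioms_def
      product_sigma_finite_def prob_space_imp_sigma_finite)

lemma indep_atoms:
  assumes M: "\<And>i. prob_space (M i)"
  shows "prob_space.indep_vars (PiM UNIV M) M (\<lambda>i f. f i) UNIV"
proof -
  interpret product_prob_space M UNIV using pps_UNIV[OF M] .
  have "distr (PiM UNIV M) (PiM UNIV M) (\<lambda>x. \<lambda>i\<in>UNIV. x i) = distr (PiM UNIV M) (PiM UNIV M) (\<lambda>x. x)"
    by (rule distr_cong) auto
  also have "\<dots> = PiM UNIV M" by (rule distr_id)
  also have "\<dots> = PiM UNIV (\<lambda>i. distr (PiM UNIV M) (M i) (\<lambda>f. f i))"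
    by (intro PiM_cong refl PiM_component[symmetric]) auto
  finally show ?thesis
    by (subst P.indep_vars_iff_distr_eq_PiM) auto
qed

lemma block_indep:
  assumes M: "\<And>i. prob_space (M i)"
    and L: "finite L" "disjoint_family_on B L"
    and S: "\<And>l. l \<in> L \<Longrightarrow> S l \<in> sets (PiM (B l) M)"
  shows "measure (PiM UNIV M) {f \<in> space (PiM UNIV M). \<forall>l\<in>L. restrict f (B l) \<in> S l}
       = (\<Prod>l\<in>L. measure (PiM UNIV M) {f \<in> space (PiM UNIV M). restrict f (B l) \<in> S l})"
proof (cases "L = {}")
  case True
  interpret product_prob_space M UNIV using pps_UNIV[OF M] .
  show ?thesis using True P.prob_space by simp
next
  case False
  interpret product_prob_space M UNIV using pps_UNIV[OF M] .
  have iv: "P.indep_vars (\<lambda>l. PiM (B l) M) (\<lambda>l f. restrict (\<lambda>i. f i) (B l)) L"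
    by (rule P.indep_vars_restrict[OF indep_atoms[OF M]]) (use L in auto)
  then have isets: "P.indep_sets (\<lambda>l. sigma_sets (space (PiM UNIV M))
        {(\<lambda>f. restrict (\<lambda>i. f i) (B l)) -` A \<inter> space (PiM UNIV M) | A. A \<in> sets (PiM (B l) M)}) L"
    unfolding P.indep_vars_def by blast
  have "P.prob (\<Inter>l\<in>L. (\<lambda>f. restrict (\<lambda>i. f i) (B l)) -` S l \<inter> space (PiM UNIV M))
     = (\<Prod>l\<in>L. P.prob ((\<lambda>f. restrict (\<lambda>i. f i) (B l)) -` S l \<inter> space (PiM UNIV M)))"
    by (rule P.indep_setsD[OF isets]) (use L False S in \<open>auto intro: sigma_sets.Basic\<close>)
  moreover have "(\<Inter>l\<in>L. (\<lambda>f. restrict (\<lambda>i. f i) (B l)) -` S l \<inter> space (PiM UNIV M))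
     = {f \<in> space (PiM UNIV M). \<forall>l\<in>L. restrict f (B l) \<in> S l}"
    using False by auto
  moreover have "\<And>l. (\<lambda>f. restrict (\<lambda>i. f i) (B l)) -` S l \<inter> space (PiM UNIV M)
     = {f \<in> space (PiM UNIV M). restrict f (B l) \<in> S l}" by auto
  ultimately show ?thesis by simp
qed



lemma meas_reindex: "(\<lambda>h. \<lambda>n. h (g n)) \<in> PiM (range g) M \<rightarrow>\<^sub>M PiM UNIV (\<lambda>n. M (g n))"
  by (rule measurable_PiM_single') (auto simp: space_PiM PiE_iff intro: measurable_component_singleton)

lemma emeasure_reindex:
  assumes M: "\<And>i. prob_space (M i)" and g: "inj g" and S: "S \<in> sets (PiM UNIV (\<lambda>n. M (g n)))"
  shows "emeasure (PiM UNIV M) {f \<in> space (PiM UNIV M). (\<lambda>n. f (g n)) \<in> S} = emeasure (PiM UNIV (\<lambda>n. M (g n))) S"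
proof -
  have "distr (PiM UNIV M) (PiM UNIV (\<lambda>n. M (g n))) (\<lambda>\<omega>. \<lambda>n\<in>UNIV. \<omega> (g n)) = PiM UNIV (\<lambda>n. M (g n))"
    by (rule distr_PiM_reindex) (use M g in auto)
  moreover have e2: "(\<lambda>\<omega>. \<lambda>n\<in>UNIV. \<omega> (g n)) = (\<lambda>\<omega> n. \<omega> (g n))" by (simp add: restrict_def)
  ultimately have eq: "distr (PiM UNIV M) (PiM UNIV (\<lambda>n. M (g n))) (\<lambda>\<omega> n. \<omega> (g n)) = PiM UNIV (\<lambda>n. M (g n))"
    by (simp only: e2)
  have meas: "(\<lambda>\<omega> n. \<omega> (g n)) \<in> PiM UNIV M \<rightarrow>\<^sub>M PiM UNIV (\<lambda>n. M (g n))"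
    by (rule measurable_PiM_single') (auto simp: space_PiM PiE_iff intro: measurable_component_singleton)
  have "emeasure (PiM UNIV (\<lambda>n. M (g n))) S = emeasure (distr (PiM UNIV M) (PiM UNIV (\<lambda>n. M (g n))) (\<lambda>\<omega> n. \<omega> (g n))) S"
    using eq by simp
  also have "\<dots> = emeasure (PiM UNIV M) ((\<lambda>\<omega> n. \<omega> (g n)) -` S \<inter> space (PiM UNIV M))"
    using S meas by (simp add: emeasure_distr)
  also have "(\<lambda>\<omega> n. \<omega> (g n)) -` S \<inter> space (PiM UNIV M) = {f \<in> space (PiM UNIV M). (\<lambda>n. f (g n)) \<in> S}"
    by auto
  finally show ?thesis by simp
qed

lemma two_block:
  assumes M: "\<And>i. prob_space (M i)" and B: "B1 \<inter> B2 = {}"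
    and S: "S1 \<in> sets (PiM B1 M)" "S2 \<in> sets (PiM B2 M)"
  shows "emeasure (PiM UNIV M) {f \<in> space (PiM UNIV M). restrict f B1 \<in> S1 \<and> restrict f B2 \<in> S2}
    = emeasure (PiM UNIV M) {f \<in> space (PiM UNIV M). restrict f B1 \<in> S1} *
      emeasure (PiM UNIV M) {f \<in> space (PiM UNIV M). restrict f B2 \<in> S2}"
proof -
  interpret product_prob_space M UNIV using pps_UNIV[OF M] .
  let ?B = "\<lambda>b. if b then B1 else B2" and ?S = "\<lambda>b. if b then S1 else S2"
  have "measure (PiM UNIV M) {f \<in> space (PiM UNIV M). \<forall>l\<in>UNIV. restrict f (?B l) \<in> ?S l}
       = (\<Prod>l\<in>UNIV. measure (PiM UNIV M) {f \<in> space (PiM UNIV M). restrict f (?B l) \<in> ?S l})"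
    by (rule block_indep[OF M]) (use B S in \<open>auto simp: disjoint_family_on_def\<close>)
  moreover have "{f \<in> space (PiM UNIV M). \<forall>l\<in>UNIV. restrict f (?B l) \<in> ?S l}
     = {f \<in> space (PiM UNIV M). restrict f B1 \<in> S1 \<and> restrict f B2 \<in> S2}"
    by (auto simp: UNIV_bool)
  ultimately have "measure (PiM UNIV M) {f \<in> space (PiM UNIV M). restrict f B1 \<in> S1 \<and> restrict f B2 \<in> S2}
     = measure (PiM UNIV M) {f \<in> space (PiM UNIV M). restrict f B1 \<in> S1} *
       measure (PiM UNIV M) {f \<in> space (PiM UNIV M). restrict f B2 \<in> S2}"
    by (simp add: UNIV_bool)
  then show ?thesis
    by (simp add: P.emeasure_eq_measure ennreal_mult[symmetric])
qed



definition sig :: "nat \<Rightarrow> 'd tatom \<Rightarrow> 'd tatom" where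
  "sig c b = (case b of Inl w \<Rightarrow> Inl (c#w) | Inr (w,i) \<Rightarrow> Inr (c#w, i))"

lemma sig_simps[simp]: "sig c (Inl w) = Inl (c#w)" "sig c (Inr (w,i)) = Inr (c#w, i)"
  by (simp_all add: sig_def)

lemma inj_sig: "inj (sig c)"
  by (auto simp: inj_def sig_def split: sum.splits prod.splits)

lemma nuT_sig[simp]: "nuT p \<mu> (sig c b) = nuT p \<mu> b"
  by (auto simp: nuT_def sig_def split: sum.splits prod.splits)

lemma Inl_nil_notin: "Inl [] \<notin> range (sig c)"
  by (auto simp: sig_def split: sum.splits prod.splits)

lemma hit_step:
  assumes "hit (Suc n) r t x"
  shows "\<exists>c. c < txi t [] \<and> hit n r (\<lambda>b. t (sig c b)) (\<lambda>i. x i + t (Inr ([c], i)))"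
proof -
  obtain w where w: "length w = Suc n" "talive t w" "inball r (\<lambda>i. x i + disp t w i)"
    using assms unfolding hit_def by blast
  then obtain c w' where cw: "w = c # w'" by (cases w) auto
  have lw': "length w' = n" using w cw by simp
  have c: "c < txi t []" using w(2) cw unfolding talive_def by (auto dest: spec[of _ 0])
  have al: "talive (\<lambda>b. t (sig c b)) w'"
    unfolding talive_def
  proof (intro allI impI)
    fix i assume "i < length w'"
    then have "(c#w') ! Suc i < txi t (take (Suc i) (c#w'))"
      using w(2) cw unfolding talive_def by (metis length_Cons not_less_eq)
    then show "w' ! i < txi (\<lambda>b. t (sig c b)) (take i w')"
      by (simp add: txi_def)
  qed
  have d: "disp t w i = t (Inr ([c], i)) + disp (\<lambda>b. t (sig c b)) w' i" for i
  proof -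
    have "disp t w i = (\<Sum>s\<in>{1..Suc n}. t (Inr (take s (c#w'), i)))"
      using w cw by (simp add: disp_def)
    also have "\<dots> = t (Inr (take 1 (c#w'), i)) + (\<Sum>s\<in>{Suc 1..Suc n}. t (Inr (take s (c#w'), i)))"
      by (subst sum.atLeast_Suc_atMost) auto
    also have "(\<Sum>s\<in>{Suc 1..Suc n}. t (Inr (take s (c#w'), i))) = (\<Sum>s\<in>{1..n}. t (Inr (take (Suc s) (c#w'), i)))"
      by (rule sum.shift_bounds_cl_Suc_ivl)
    also have "\<dots> = disp (\<lambda>b. t (sig c b)) w' i"
      using lw' by (simp add: disp_def)
    finally show ?thesis by simp
  qed
  have "inball r (\<lambda>i. (x i + t (Inr ([c], i))) + disp (\<lambda>b. t (sig c b)) w' i)"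
    using w(3) by (simp add: d add.assoc)
  then show ?thesis using c al lw' unfolding hit_def by blast
qed

lemma Leb_prob: "product_sigma_finite (\<lambda>_::'d. lborel)"
  by (simp add: product_sigma_finite_def sigma_finite_lborel)

lemma meas_translate: "(\<lambda>x i. x i + a i) \<in> Leb \<rightarrow>\<^sub>M (Leb :: ('d::finite \<Rightarrow> real) measure)"
  unfolding Leb_def
proof (rule measurable_PiM_single')
  fix i :: 'd
  have "(\<lambda>x. x i) \<in> PiM UNIV (\<lambda>_::'d. lborel) \<rightarrow>\<^sub>M borel"
    by (rule meas_borel_cong[OF measurable_component_singleton]) auto
  then show "(\<lambda>x. x i + a i) \<in> PiM UNIV (\<lambda>_::'d. lborel) \<rightarrow>\<^sub>M lborel"
    using measurable_cong_sets[of _ _ lborel borel] by auto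
qed (auto simp: space_PiM)

lemma Leb_translate:
  fixes a :: "'d::finite \<Rightarrow> real"
  shows "distr Leb Leb (\<lambda>x i. x i + a i) = (Leb :: ('d \<Rightarrow> real) measure)"
proof -
  interpret product_sigma_finite "\<lambda>_::'d. lborel" by (rule Leb_prob)
  have meas: "(\<lambda>x i. x i + a i) \<in> Leb \<rightarrow>\<^sub>M (Leb :: ('d \<Rightarrow> real) measure)"
    by (rule meas_translate)
  show ?thesis unfolding Leb_def
  proof (rule PiM_eqI)
    fix A :: "'d \<Rightarrow> real set" assume A: "\<And>i. i \<in> UNIV \<Longrightarrow> A i \<in> sets lborel"
    have "(\<lambda>x i. x i + a i) -` Pi\<^sub>E UNIV A \<inter> space (PiM UNIV (\<lambda>_. lborel)) = Pi\<^sub>E UNIV (\<lambda>i. (\<lambda>y. a i + y) -` A i)"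
      by (auto simp: space_PiM PiE_iff add.commute)
    moreover have "emeasure lborel ((\<lambda>y. a i + y) -` A i) = emeasure lborel (A i)" for i
    proof -
      have "emeasure lborel (A i) = emeasure (distr lborel borel ((+) (a i))) (A i)"
        by (simp add: lborel_distr_plus)
      also have "\<dots> = emeasure lborel ((\<lambda>y. a i + y) -` A i)"
        using A by (subst emeasure_distr) auto
      finally show ?thesis by simp
    qed
    ultimately show "emeasure (distr (PiM UNIV (\<lambda>_. lborel)) (PiM UNIV (\<lambda>_. lborel)) (\<lambda>x i. x i + a i)) (Pi\<^sub>E UNIV A) =
        (\<Prod>i\<in>UNIV. emeasure lborel (A i))"
    proof -
      have pm: "(\<lambda>y. a i + y) -` A i \<in> sets lborel" for i
      proof -
        have "(\<lambda>y. a i + y) \<in> borel_measurable borel" by measurable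
        then show ?thesis using A[of i] measurable_sets_borel[of "\<lambda>y. a i + y" borel "A i"] by simp
      qed
      have "emeasure (distr (PiM UNIV (\<lambda>_. lborel)) (PiM UNIV (\<lambda>_. lborel)) (\<lambda>x i. x i + a i)) (Pi\<^sub>E UNIV A)
         = emeasure (PiM UNIV (\<lambda>_. lborel)) ((\<lambda>x i. x i + a i) -` Pi\<^sub>E UNIV A \<inter> space (PiM UNIV (\<lambda>_. lborel)))"
        using A meas unfolding Leb_def by (subst emeasure_distr) (auto intro!: sets_PiM_I_finite)
      also have "\<dots> = emeasure (PiM UNIV (\<lambda>_. lborel)) (Pi\<^sub>E UNIV (\<lambda>i. (\<lambda>y. a i + y) -` A i))"
        using calculation by (simp add: \<open>(\<lambda>x i. x i + a i) -` Pi\<^sub>E UNIV A \<inter> space (PiM UNIV (\<lambda>_. lborel)) = _\<close>)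
      also have "\<dots> = (\<Prod>i\<in>UNIV. emeasure lborel ((\<lambda>y. a i + y) -` A i))"
        using pm by (subst emeasure_PiM) auto
      finally show ?thesis using \<open>\<And>i. emeasure lborel ((\<lambda>y. a i + y) -` A i) = emeasure lborel (A i)\<close> by simp
    qed
  qed auto
qed

lemma Leb_translate_set:
  fixes a :: "'d::finite \<Rightarrow> real"
  assumes "Measurable.pred Leb P"
  shows "emeasure Leb {x \<in> space Leb. P (\<lambda>i. x i + a i)} = emeasure Leb {x \<in> space Leb. P x}"
proof -
  have meas: "(\<lambda>x i. x i + a i) \<in> Leb \<rightarrow>\<^sub>M (Leb :: ('d \<Rightarrow> real) measure)"
    by (rule meas_translate)
  have "emeasure Leb {x \<in> space Leb. P x} = emeasure (distr Leb Leb (\<lambda>x i. x i + a i)) {x \<in> space Leb. P x}"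
    by (simp add: Leb_translate)
  also have "\<dots> = emeasure Leb ((\<lambda>x i. x i + a i) -` {x \<in> space Leb. P x} \<inter> space Leb)"
    using meas assms by (intro emeasure_distr) auto
  also have "(\<lambda>x i. x i + a i) -` {x \<in> space Leb. P x} \<inter> space Leb = {x \<in> space Leb. P (\<lambda>i. x i + a i)}"
    by (auto simp: space_PiM Leb_def)
  finally show ?thesis by simp
qed



lemma prob_nuT: "prob_space \<mu> \<Longrightarrow> prob_space (nuT p \<mu> b)"
  by (auto simp: nuT_def prob_PR split: sum.splits)

lemma sets_nuT: "sets \<mu> = sets borel \<Longrightarrow> sets (nuT p \<mu> b) = sets borel"
  by (auto simp: nuT_def split: sum.splits)

definition Qm :: "nat pmf \<Rightarrow> real measure \<Rightarrow> (('d tatom) \<Rightarrow> real) measure" where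
  "Qm p \<mu> = PiM UNIV (nuT p \<mu>)"

lemma prob_Qm: "prob_space \<mu> \<Longrightarrow> prob_space (Qm p \<mu>)"
  unfolding Qm_def by (rule prob_space_PiM) (rule prob_nuT)

lemma Qpair:
  assumes \<mu>: "prob_space \<mu>"
  shows "distr (Qm p \<mu>) (PR p \<Otimes>\<^sub>M Qm p \<mu>) (\<lambda>t. (t (Inl []), \<lambda>b. t (sig c b))) = PR p \<Otimes>\<^sub>M (Qm p \<mu> :: ('d tatom \<Rightarrow> real) measure)"
proof -
  let ?Q = "Qm p \<mu> :: ('d tatom \<Rightarrow> real) measure"
  let ?M = "nuT p \<mu> :: 'd tatom \<Rightarrow> real measure"
  interpret Q: product_prob_space ?M UNIV using pps_UNIV[OF prob_nuT[OF \<mu>]] .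
  have mphi: "(\<lambda>t. (t (Inl []), \<lambda>b. t (sig c b))) \<in> ?Q \<rightarrow>\<^sub>M PR p \<Otimes>\<^sub>M ?Q"
  proof (rule measurable_Pair)
    show "(\<lambda>t. t (Inl [])) \<in> ?Q \<rightarrow>\<^sub>M PR p"
      using measurable_component_singleton[of "Inl []" UNIV ?M] by (simp add: Qm_def nuT_def)
    have cs: "(\<lambda>\<omega>. \<omega> (sig c b)) \<in> PiM UNIV ?M \<rightarrow>\<^sub>M ?M b" for b
      using measurable_component_singleton[of "sig c b" UNIV ?M] by simp
    have "(\<lambda>t. \<lambda>b. t (sig c b)) \<in> PiM UNIV ?M \<rightarrow>\<^sub>M PiM UNIV ?M"
      by (rule measurable_PiM_single') (auto simp: space_PiM PiE_iff intro: cs, metis nuT_sig)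
    then show "(\<lambda>t. \<lambda>b. t (sig c b)) \<in> ?Q \<rightarrow>\<^sub>M ?Q" by (simp add: Qm_def)
  qed
  show ?thesis
  proof (rule pair_measure_eqI[symmetric])
    show "sigma_finite_measure (PR p)" using prob_PR prob_space_imp_sigma_finite by blast
    show "sigma_finite_measure ?Q" using prob_Qm[OF \<mu>] prob_space_imp_sigma_finite by blast
    show "sets (PR p \<Otimes>\<^sub>M ?Q) = sets (distr ?Q (PR p \<Otimes>\<^sub>M ?Q) (\<lambda>t. (t (Inl []), \<lambda>b. t (sig c b))))"
      by simp
    fix A B assume A: "A \<in> sets (PR p)" and B: "B \<in> sets ?Q"
    define S1 where "S1 = {h \<in> space (PiM {Inl []} ?M). h (Inl []) \<in> A}"
    define S2 where "S2 = {h \<in> space (PiM (range (sig c)) ?M). (\<lambda>n. h (sig c n)) \<in> B}"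
    have S1: "S1 \<in> sets (PiM {Inl []} ?M)"
    proof -
      have mc: "(\<lambda>h. h (Inl [])) \<in> PiM {Inl []} ?M \<rightarrow>\<^sub>M ?M (Inl [])"
        by (rule measurable_component_singleton) simp
      have "(\<lambda>h. h (Inl [])) -` A \<inter> space (PiM {Inl []} ?M) \<in> sets (PiM {Inl []} ?M)"
        using measurable_sets[OF mc, of A] A by (simp add: nuT_def)
      moreover have "(\<lambda>h. h (Inl [])) -` A \<inter> space (PiM {Inl []} ?M) = S1" by (auto simp: S1_def)
      ultimately show ?thesis by simp
    qed
    have S2: "S2 \<in> sets (PiM (range (sig c)) ?M)"
    proof -
      have "(\<lambda>h. \<lambda>n. h (sig c n)) \<in> PiM (range (sig c)) ?M \<rightarrow>\<^sub>M PiM UNIV (\<lambda>n. ?M (sig c n))"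
        by (rule meas_reindex)
      then have mr: "(\<lambda>h. \<lambda>n. h (sig c n)) \<in> PiM (range (sig c)) ?M \<rightarrow>\<^sub>M ?Q" by (simp add: Qm_def)
      have "(\<lambda>h. \<lambda>n. h (sig c n)) -` B \<inter> space (PiM (range (sig c)) ?M) \<in> sets (PiM (range (sig c)) ?M)"
        by (rule measurable_sets[OF mr B])
      moreover have "(\<lambda>h. \<lambda>n. h (sig c n)) -` B \<inter> space (PiM (range (sig c)) ?M) = S2" by (auto simp: S2_def)
      ultimately show ?thesis by simp
    qed
    have dis: "{Inl []} \<inter> range (sig c) = {}" using Inl_nil_notin by auto
    have e1: "{f \<in> space ?Q. restrict f {Inl []} \<in> S1} = {f \<in> space ?Q. f (Inl []) \<in> A}"
      by (auto simp: S1_def space_PiM Qm_def)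
    have e2: "{f \<in> space ?Q. restrict f (range (sig c)) \<in> S2} = {f \<in> space ?Q. (\<lambda>n. f (sig c n)) \<in> B}"
      by (auto simp: S2_def space_PiM Qm_def PiE_iff, metis nuT_sig)
    have e12: "{f \<in> space ?Q. restrict f {Inl []} \<in> S1 \<and> restrict f (range (sig c)) \<in> S2} =
       (\<lambda>t. (t (Inl []), \<lambda>b. t (sig c b))) -` (A \<times> B) \<inter> space ?Q"
      by (auto simp: S1_def S2_def space_PiM Qm_def PiE_iff, metis nuT_sig)
    have "emeasure (distr ?Q (PR p \<Otimes>\<^sub>M ?Q) (\<lambda>t. (t (Inl []), \<lambda>b. t (sig c b)))) (A \<times> B)
       = emeasure ?Q ((\<lambda>t. (t (Inl []), \<lambda>b. t (sig c b))) -` (A \<times> B) \<inter> space ?Q)"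
      using A B mphi by (intro emeasure_distr) auto
    also have "\<dots> = emeasure ?Q {f \<in> space ?Q. f (Inl []) \<in> A} * emeasure ?Q {f \<in> space ?Q. (\<lambda>n. f (sig c n)) \<in> B}"
      unfolding e12[symmetric] e1[symmetric] e2[symmetric] unfolding Qm_def
      by (rule two_block[OF prob_nuT[OF \<mu>] dis S1 S2])
    also have "emeasure ?Q {f \<in> space ?Q. f (Inl []) \<in> A} = emeasure (PR p) A"
      using A unfolding Qm_def by (subst Q.emeasure_PiM_Collect_single) (auto simp: nuT_def)
    also have "emeasure ?Q {f \<in> space ?Q. (\<lambda>n. f (sig c n)) \<in> B} = emeasure ?Q B"
      using emeasure_reindex[where M="nuT p \<mu>" and g="sig c" and S=B] prob_nuT[OF \<mu>] inj_sig B by (simp add: Qm_def) blast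
    finally show "emeasure (PR p) A * emeasure ?Q B =
       emeasure (distr ?Q (PR p \<Otimes>\<^sub>M ?Q) (\<lambda>t. (t (Inl []), \<lambda>b. t (sig c b)))) (A \<times> B)" by simp
  qed
qed



lemma sf_Leb: "sigma_finite_measure (Leb :: ('d::finite \<Rightarrow> real) measure)"
  unfolding Leb_def by (rule product_sigma_finite.sigma_finite[OF Leb_prob]) simp

lemma sf_Qm: "prob_space \<mu> \<Longrightarrow> sigma_finite_measure (Qm p \<mu>)"
  using prob_Qm prob_space_imp_sigma_finite by blast

lemma space_nuT_PiM[simp]: "sets \<mu> = sets borel \<Longrightarrow> space (PiM UNIV (nuT p \<mu>)) = UNIV"
proof -
  assume "sets \<mu> = sets borel"
  then have "space (nuT p \<mu> b) = UNIV" for b using sets_nuT[of \<mu> p b] sets_eq_imp_space_eq[of "nuT p \<mu> b" borel] by simp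
  then show ?thesis by (auto simp: space_PiM)
qed

lemma space_Qm[simp]: "sets \<mu> = sets borel \<Longrightarrow> space (Qm p \<mu>) = UNIV"
  unfolding Qm_def by (rule space_nuT_PiM)

lemma space_Leb[simp]: "space Leb = UNIV"
  by (auto simp: Leb_def space_PiM)

lemma meas_hit_pair:
  assumes "sets \<mu> = sets borel"
  shows "Measurable.pred (Qm p \<mu> \<Otimes>\<^sub>M Leb) (\<lambda>z. hit n r (fst z) (snd z :: 'd::finite \<Rightarrow> real))"
proof (rule meas_hit)
  show "fst \<in> Qm p \<mu> \<Otimes>\<^sub>M Leb \<rightarrow>\<^sub>M PiM UNIV (nuT p \<mu>)" unfolding Qm_def by (rule measurable_fst)
  show "snd \<in> Qm p \<mu> \<Otimes>\<^sub>M Leb \<rightarrow>\<^sub>M Leb" by (rule measurable_snd)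
qed (rule sets_nuT[OF assms])

lemma meas_hit_Q:
  assumes "sets \<mu> = sets borel"
  shows "Measurable.pred (Qm p \<mu>) (\<lambda>t. hit n r t (x :: 'd::finite \<Rightarrow> real))"
proof (rule meas_hit)
  show "(\<lambda>t. t) \<in> Qm p \<mu> \<rightarrow>\<^sub>M PiM UNIV (nuT p \<mu>)" unfolding Qm_def by simp
  show "(\<lambda>t. x) \<in> Qm p \<mu> \<rightarrow>\<^sub>M Leb" by simp
qed (rule sets_nuT[OF assms])

lemma meas_hit_L:
  fixes \<mu> :: "real measure"
  assumes "sets \<mu> = sets borel"
  shows "Measurable.pred Leb (\<lambda>x. hit n r (t :: 'd::finite tatom \<Rightarrow> real) (x :: 'd \<Rightarrow> real))"
proof (rule meas_hit[where N="nuT p \<mu>"])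
  show "(\<lambda>x. t) \<in> Leb \<rightarrow>\<^sub>M PiM UNIV (nuT p \<mu>)" 
    using assms by (intro measurable_const) simp
  show "(\<lambda>x. x) \<in> Leb \<rightarrow>\<^sub>M Leb" by simp
qed (rule sets_nuT[OF assms])

definition GL :: "nat \<Rightarrow> real \<Rightarrow> ('d::finite tatom \<Rightarrow> real) \<Rightarrow> ennreal" where
  "GL n r t = emeasure Leb {x \<in> space Leb. hit n r t x}"

definition HQ :: "nat pmf \<Rightarrow> real measure \<Rightarrow> nat \<Rightarrow> real \<Rightarrow> 'd::finite itself \<Rightarrow> ennreal" where
  "HQ p \<mu> n r _ = (\<integral>\<^sup>+ x. emeasure (Qm p \<mu> :: ('d tatom \<Rightarrow> real) measure) {t \<in> space (Qm p \<mu>). hit n r t x} \<partial>(Leb :: ('d \<Rightarrow> real) measure))"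

lemma GL_meas:
  assumes \<mu>: "prob_space \<mu>" "sets \<mu> = sets borel"
  shows "(\<lambda>t. GL n r t) \<in> borel_measurable (Qm p \<mu> :: ('d::finite tatom \<Rightarrow> real) measure)"
proof -
  interpret L: sigma_finite_measure "Leb :: ('d \<Rightarrow> real) measure" by (rule sf_Leb)
  let ?S = "{z \<in> space (Qm p \<mu> \<Otimes>\<^sub>M Leb). hit n r (fst z) (snd z :: 'd \<Rightarrow> real)}"
  have "?S \<in> sets (Qm p \<mu> \<Otimes>\<^sub>M Leb)" using meas_hit_pair[OF \<mu>(2)] by measurable
  then have "(\<lambda>t. emeasure Leb (Pair t -` ?S)) \<in> borel_measurable (Qm p \<mu>)"
    by (rule L.measurable_emeasure_Pair)
  moreover have "Pair t -` ?S = {x \<in> space Leb. hit n r t x}" for t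
    using \<mu> by (auto simp: space_pair_measure)
  ultimately show ?thesis by (simp add: GL_def)
qed

lemma HQ_swap:
  assumes \<mu>: "prob_space \<mu>" "sets \<mu> = sets borel"
  shows "HQ p \<mu> n r TYPE('d::finite) = (\<integral>\<^sup>+ t. GL n r t \<partial>(Qm p \<mu> :: ('d tatom \<Rightarrow> real) measure))"
proof -
  interpret L: sigma_finite_measure "Leb :: ('d \<Rightarrow> real) measure" by (rule sf_Leb)
  interpret Q: sigma_finite_measure "Qm p \<mu> :: ('d tatom \<Rightarrow> real) measure" by (rule sf_Qm[OF \<mu>(1)])
  interpret QL: pair_sigma_finite "Qm p \<mu> :: ('d tatom \<Rightarrow> real) measure" "Leb :: ('d \<Rightarrow> real) measure" ..
  let ?S = "{z \<in> space (Qm p \<mu> \<Otimes>\<^sub>M Leb). hit n r (fst z) (snd z :: 'd \<Rightarrow> real)}"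
  have S: "?S \<in> sets (Qm p \<mu> \<Otimes>\<^sub>M Leb)" using meas_hit_pair[OF \<mu>(2)] by measurable
  have "HQ p \<mu> n r TYPE('d) = (\<integral>\<^sup>+ x. \<integral>\<^sup>+ t. indicator ?S (t, x) \<partial>Qm p \<mu> \<partial>Leb)"
    unfolding HQ_def
  proof (rule nn_integral_cong)
    fix x :: "'d \<Rightarrow> real"
    have "{t \<in> space (Qm p \<mu>). hit n r t x} \<in> sets (Qm p \<mu>)" using meas_hit_Q[OF \<mu>(2)] by measurable
    then have "emeasure (Qm p \<mu>) {t \<in> space (Qm p \<mu>). hit n r t x} = (\<integral>\<^sup>+ t. indicator {t \<in> space (Qm p \<mu>). hit n r t x} t \<partial>Qm p \<mu>)"
      by simp
    also have "\<dots> = (\<integral>\<^sup>+ t. indicator ?S (t, x) \<partial>Qm p \<mu>)"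
      using \<mu> by (intro nn_integral_cong) (auto simp: indicator_def space_pair_measure)
    finally show "emeasure (Qm p \<mu>) {t \<in> space (Qm p \<mu>). hit n r t x} = (\<integral>\<^sup>+ t. indicator ?S (t, x) \<partial>Qm p \<mu>)" .
  qed
  also have "\<dots> = (\<integral>\<^sup>+ t. \<integral>\<^sup>+ x. indicator ?S (t, x) \<partial>Leb \<partial>Qm p \<mu>)"
    by (rule QL.Fubini') (use S in simp)
  also have "\<dots> = (\<integral>\<^sup>+ t. GL n r (t :: 'd tatom \<Rightarrow> real) \<partial>Qm p \<mu>)"
  proof (rule nn_integral_cong)
    fix t :: "'d tatom \<Rightarrow> real"
    have "{x \<in> space Leb. hit n r t x} \<in> sets Leb" using meas_hit_L[OF \<mu>(2)] by measurable
    then have "GL n r t = (\<integral>\<^sup>+ x. indicator {x \<in> space Leb. hit n r t x} x \<partial>Leb)"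
      by (simp add: GL_def)
    also have "\<dots> = (\<integral>\<^sup>+ x. indicator ?S (t, x) \<partial>Leb)"
      using \<mu> by (intro nn_integral_cong) (auto simp: indicator_def space_pair_measure)
    finally show "(\<integral>\<^sup>+ x. indicator ?S (t, x) \<partial>Leb) = GL n r t" by simp
  qed
  finally show ?thesis .
qed



lemma GL_step:
  fixes \<mu> :: "real measure" and t :: "'d::finite tatom \<Rightarrow> real"
  assumes \<mu>: "sets \<mu> = sets borel"
  shows "GL (Suc n) r t \<le> (\<Sum>c. (if c < txi t [] then 1 else 0) * GL n r (\<lambda>b. t (sig c b)))"
proof -
  define A where "A c = {x \<in> space Leb. c < txi t [] \<and> hit n r (\<lambda>b. t (sig c b)) (\<lambda>i. x i + t (Inr ([c], i)))}" for c
  have Ameas: "A c \<in> sets Leb" for c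
  proof -
    have "Measurable.pred Leb (\<lambda>x. hit n r (\<lambda>b. t (sig c b)) (\<lambda>i. x i + t (Inr ([c], i))))"
    proof (rule meas_hit[where N="nuT p \<mu>"])
      show "(\<lambda>x. \<lambda>b. t (sig c b)) \<in> Leb \<rightarrow>\<^sub>M PiM UNIV (nuT p \<mu>)"
        using \<mu> by (intro measurable_const) simp
      show "(\<lambda>x i. x i + t (Inr ([c], i))) \<in> Leb \<rightarrow>\<^sub>M Leb" by (rule meas_translate)
    qed (rule sets_nuT[OF \<mu>])
    then show ?thesis unfolding A_def by measurable
  qed
  have "GL (Suc n) r t \<le> emeasure Leb (\<Union>c. A c)"
    unfolding GL_def using Ameas
    by (intro emeasure_mono) (auto simp: A_def dest!: hit_step)
  also have "\<dots> \<le> (\<Sum>c. emeasure Leb (A c))"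
    using Ameas by (intro emeasure_subadditive_countably) auto
  finally have fin: "GL (Suc n) r t \<le> (\<Sum>c. emeasure Leb (A c))" .
  have eqA: "emeasure Leb (A c) = (if c < txi t [] then 1 else 0) * GL n r (\<lambda>b. t (sig c b))" for c
  proof (cases "c < txi t []")
    case True
    then have "A c = {x \<in> space Leb. hit n r (\<lambda>b. t (sig c b)) (\<lambda>i. x i + t (Inr ([c], i)))}"
      by (auto simp: A_def)
    then show ?thesis using True
      Leb_translate_set[OF meas_hit_L[OF \<mu>, of n r "\<lambda>b. t (sig c b)"], of "\<lambda>i. t (Inr ([c], i))"]
      by (simp add: GL_def)
  next
    case False
    then show ?thesis by (simp add: A_def)
  qed
  show ?thesis using fin by (simp add: eqA)
qed

lemma meas_shift:
  assumes "sets \<mu> = sets borel"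
  shows "(\<lambda>t. \<lambda>b. t (sig c b)) \<in> Qm p \<mu> \<rightarrow>\<^sub>M (Qm p \<mu> :: ('d tatom \<Rightarrow> real) measure)"
proof -
  let ?M = "nuT p \<mu> :: 'd tatom \<Rightarrow> real measure"
  have cs: "(\<lambda>\<omega>. \<omega> (sig c b)) \<in> PiM UNIV ?M \<rightarrow>\<^sub>M ?M b" for b
    using measurable_component_singleton[of "sig c b" UNIV ?M] by simp
  have "(\<lambda>t. \<lambda>b. t (sig c b)) \<in> PiM UNIV ?M \<rightarrow>\<^sub>M PiM UNIV ?M"
    by (rule measurable_PiM_single') (auto simp: space_PiM PiE_iff intro: cs, metis nuT_sig)
  then show ?thesis by (simp add: Qm_def)
qed

lemma int_term:
  fixes \<mu> :: "real measure"
  assumes \<mu>: "prob_space \<mu>" "sets \<mu> = sets borel"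
  shows "(\<integral>\<^sup>+ t. (if c < txi t [] then 1 else 0) * GL n r (\<lambda>b. t (sig c b)) \<partial>(Qm p \<mu> :: ('d::finite tatom \<Rightarrow> real) measure))
    = emeasure (PR p) {a \<in> space (PR p). c < nat \<lfloor>a\<rfloor>} * (\<integral>\<^sup>+ t. GL n r t \<partial>(Qm p \<mu> :: ('d tatom \<Rightarrow> real) measure))"
proof -
  let ?Q = "Qm p \<mu> :: ('d tatom \<Rightarrow> real) measure"
  interpret Q: sigma_finite_measure ?Q by (rule sf_Qm[OF \<mu>(1)])
  define F where "F z = (if c < nat \<lfloor>fst z\<rfloor> then 1 else 0) * GL n r (snd z)" for z :: "real \<times> ('d tatom \<Rightarrow> real)"
  have GLm[measurable]: "(\<lambda>t. GL n r t) \<in> borel_measurable ?Q" by (rule GL_meas[OF \<mu>])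
  have fstm[measurable]: "(\<lambda>z. fst z) \<in> borel_measurable (PR p \<Otimes>\<^sub>M ?Q)"
    by (rule meas_borel_cong[OF measurable_fst]) simp
  have Fm: "F \<in> borel_measurable (PR p \<Otimes>\<^sub>M ?Q)" unfolding F_def by measurable
  have phim: "(\<lambda>t. (t (Inl []), \<lambda>b. t (sig c b))) \<in> ?Q \<rightarrow>\<^sub>M PR p \<Otimes>\<^sub>M ?Q"
  proof (rule measurable_Pair)
    show "(\<lambda>t. t (Inl [])) \<in> ?Q \<rightarrow>\<^sub>M PR p"
      using measurable_component_singleton[of "Inl []" UNIV "nuT p \<mu>"] by (simp add: Qm_def nuT_def)
  qed (rule meas_shift[OF \<mu>(2)])
  have "(\<integral>\<^sup>+ t. (if c < txi t [] then 1 else 0) * GL n r (\<lambda>b. t (sig c b)) \<partial>?Q)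
      = (\<integral>\<^sup>+ t. F (t (Inl []), \<lambda>b. t (sig c b)) \<partial>?Q)"
    by (simp add: F_def txi_def)
  also have "\<dots> = (\<integral>\<^sup>+ z. F z \<partial>distr ?Q (PR p \<Otimes>\<^sub>M ?Q) (\<lambda>t. (t (Inl []), \<lambda>b. t (sig c b))))"
    using Fm phim by (subst nn_integral_distr) auto
  also have "\<dots> = (\<integral>\<^sup>+ z. F z \<partial>(PR p \<Otimes>\<^sub>M ?Q))"
    by (simp add: Qpair[OF \<mu>(1)])
  also have "\<dots> = (\<integral>\<^sup>+ a. \<integral>\<^sup>+ s. F (a, s) \<partial>?Q \<partial>PR p)"
    by (rule Q.nn_integral_fst[symmetric, OF Fm])
  also have "\<dots> = (\<integral>\<^sup>+ a. (if c < nat \<lfloor>a\<rfloor> then 1 else 0) * (\<integral>\<^sup>+ s. GL n r s \<partial>?Q) \<partial>PR p)"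
    unfolding F_def by (intro nn_integral_cong) (simp add: nn_integral_cmult)
  also have "\<dots> = (\<integral>\<^sup>+ a. (if c < nat \<lfloor>a\<rfloor> then 1 else 0) \<partial>PR p) * (\<integral>\<^sup>+ s. GL n r s \<partial>?Q)"
  proof (rule nn_integral_multc)
    have "(\<lambda>x::real. if c < nat \<lfloor>x\<rfloor> then 1 else (0::ennreal)) \<in> borel_measurable borel" by measurable
    then show "(\<lambda>x::real. if c < nat \<lfloor>x\<rfloor> then 1 else (0::ennreal)) \<in> borel_measurable (PR p)"
      by (simp add: measurable_cong_sets[OF sets_PR refl])
  qed
  also have "(\<integral>\<^sup>+ a. (if c < nat \<lfloor>a\<rfloor> then 1 else 0) \<partial>PR p) = (\<integral>\<^sup>+ a. indicator {a \<in> space (PR p). c < nat \<lfloor>a\<rfloor>} a \<partial>PR p)"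
    by (intro nn_integral_cong) (auto simp: indicator_def)
  also have "\<dots> = emeasure (PR p) {a \<in> space (PR p). c < nat \<lfloor>a\<rfloor>}"
  proof (rule nn_integral_indicator)
    have sp: "space (PR p) = UNIV" by (simp add: PR_def)
    have "{a::real. c < nat \<lfloor>a\<rfloor>} \<in> sets borel" by measurable
    then show "{a \<in> space (PR p). c < nat \<lfloor>a\<rfloor>} \<in> sets (PR p)" unfolding sp by simp
  qed
  finally show ?thesis .
qed

lemma sum_PR:
  "(\<Sum>c. emeasure (PR p) {a \<in> space (PR p). c < nat \<lfloor>a\<rfloor>}) = (\<integral>\<^sup>+ k. ennreal (real k) \<partial>measure_pmf p)"
proof -
  have e: "emeasure (PR p) {a \<in> space (PR p). c < nat \<lfloor>a\<rfloor>} = (\<integral>\<^sup>+ k. indicator {k. c < k} k \<partial>measure_pmf p)" for c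
  proof -
    have "emeasure (PR p) {a \<in> space (PR p). c < nat \<lfloor>a\<rfloor>} = emeasure (measure_pmf p) (real -` {a \<in> space (PR p). c < nat \<lfloor>a\<rfloor>} \<inter> space (measure_pmf p))"
    proof -
      have sp: "space (PR p) = UNIV" by (simp add: PR_def)
      have "{a::real. c < nat \<lfloor>a\<rfloor>} \<in> sets borel" by measurable
      then show ?thesis unfolding sp unfolding PR_def by (intro emeasure_distr) auto
    qed
    also have "real -` {a \<in> space (PR p). c < nat \<lfloor>a\<rfloor>} \<inter> space (measure_pmf p) = {k. c < k}"
      by (auto simp: PR_def)
    finally show ?thesis by simp
  qed
  have s: "(\<Sum>c. indicator {k. c < k} k :: ennreal) = ennreal (real k)" for k :: nat
  proof -
    have "(\<Sum>c. indicator {k. c < k} k :: ennreal) = (\<Sum>c<k. indicator {k. c < k} k)"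
      by (rule suminf_finite) auto
    also have "\<dots> = (\<Sum>c<k. 1)" by (intro sum.cong) auto
    finally show ?thesis by (simp add: ennreal_of_nat_eq_real_of_nat)
  qed
  have "(\<Sum>c. emeasure (PR p) {a \<in> space (PR p). c < nat \<lfloor>a\<rfloor>}) = (\<Sum>c. \<integral>\<^sup>+ k. indicator {k. c < k} k \<partial>measure_pmf p)"
    by (simp add: e)
  also have "\<dots> = (\<integral>\<^sup>+ k. (\<Sum>c. indicator {k. c < k} k) \<partial>measure_pmf p)"
    by (rule nn_integral_suminf[symmetric]) simp
  also have "\<dots> = (\<integral>\<^sup>+ k. ennreal (real k) \<partial>measure_pmf p)" by (simp add: s)
  finally show ?thesis .
qed

lemma HQ_step:
  fixes \<mu> :: "real measure"
  assumes \<mu>: "prob_space \<mu>" "sets \<mu> = sets borel"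
    and mean: "(\<integral>\<^sup>+ k. ennreal (real k) \<partial>measure_pmf p) \<le> 1"
  shows "HQ p \<mu> (Suc n) r TYPE('d::finite) \<le> HQ p \<mu> n r TYPE('d)"
proof -
  let ?Q = "Qm p \<mu> :: ('d tatom \<Rightarrow> real) measure"
  have GLm[measurable]: "(\<lambda>t. GL n r t) \<in> borel_measurable ?Q" by (rule GL_meas[OF \<mu>])
  have txim[measurable]: "(\<lambda>t. txi t w) \<in> ?Q \<rightarrow>\<^sub>M count_space UNIV" for w
    by (rule meas_txi[where N="nuT p \<mu>"]) (auto simp: Qm_def nuT_def)
  have shm[measurable]: "(\<lambda>t. \<lambda>b. t (sig c b)) \<in> ?Q \<rightarrow>\<^sub>M ?Q" for c by (rule meas_shift[OF \<mu>(2)])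
  have "HQ p \<mu> (Suc n) r TYPE('d) = (\<integral>\<^sup>+ t. GL (Suc n) r t \<partial>?Q)" by (rule HQ_swap[OF \<mu>])
  also have "\<dots> \<le> (\<integral>\<^sup>+ t. (\<Sum>c. (if c < txi t [] then 1 else 0) * GL n r (\<lambda>b. t (sig c b))) \<partial>?Q)"
    by (intro nn_integral_mono GL_step[OF \<mu>(2)])
  also have "\<dots> = (\<Sum>c. \<integral>\<^sup>+ t. (if c < txi t [] then 1 else 0) * GL n r (\<lambda>b. t (sig c b)) \<partial>?Q)"
    by (rule nn_integral_suminf) measurable
  also have "\<dots> = (\<Sum>c. emeasure (PR p) {a \<in> space (PR p). c < nat \<lfloor>a\<rfloor>} * (\<integral>\<^sup>+ t. GL n r t \<partial>?Q))"
    by (simp add: int_term[OF \<mu>])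
  also have "\<dots> = (\<integral>\<^sup>+ k. ennreal (real k) \<partial>measure_pmf p) * (\<integral>\<^sup>+ t. GL n r t \<partial>?Q)"
    by (simp add: sum_PR)
  also have "\<dots> \<le> 1 * (\<integral>\<^sup>+ t. GL n r t \<partial>?Q)"
    by (intro mult_right_mono mean) simp
  also have "\<dots> = HQ p \<mu> n r TYPE('d)" by (simp add: HQ_swap[OF \<mu>])
  finally show ?thesis .
qed



definition Uk :: "int^'d \<Rightarrow> ('d::finite \<Rightarrow> real) measure" where
  "Uk k = PiM UNIV (\<lambda>i. unif (real_of_int (k$i)))"

definition FP :: "nat pmf \<Rightarrow> real measure \<Rightarrow> int^'d \<Rightarrow> ('d::finite fatom \<Rightarrow> real) measure" where
  "FP p \<mu> k = PiM UNIV (nuF p \<mu> k)"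

definition cube :: "int^'d \<Rightarrow> ('d::finite \<Rightarrow> real) set" where
  "cube k = PiE UNIV (\<lambda>i. {real_of_int (k$i) ..< real_of_int (k$i) + 1})"

lemma prob_nuF: "prob_space \<mu> \<Longrightarrow> prob_space (nuF p \<mu> k a)"
  by (auto simp: nuF_def prob_unif prob_nuT split: sum.splits)

lemma sets_nuF: "sets \<mu> = sets borel \<Longrightarrow> sets (nuF p \<mu> k a) = sets borel"
  by (auto simp: nuF_def sets_nuT split: sum.splits)

lemma prob_Uk: "prob_space (Uk k)"
  unfolding Uk_def by (rule prob_space_PiM) (rule prob_unif)

lemma sets_Uk: "sets (Uk k) = sets Leb"
  unfolding Uk_def Leb_def by (rule sets_PiM_cong) auto

lemma cube_sets: "cube k \<in> sets Leb"
  unfolding cube_def Leb_def by (rule sets_PiM_I_finite) auto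

lemma Uk_density:
  fixes k :: "int^'d::finite"
  shows "Uk k = density Leb (indicator (cube k))"
proof -
  let ?M = "\<lambda>i::'d. unif (real_of_int (k$i))"
  interpret product_sigma_finite ?M
    by (simp add: product_sigma_finite_def prob_space_imp_sigma_finite prob_unif)
  interpret L: product_sigma_finite "\<lambda>_::'d. lborel" by (rule Leb_prob)
  have "density Leb (indicator (cube k)) = PiM UNIV ?M"
  proof (rule PiM_eqI)
    show "sets (density Leb (indicator (cube k))) = sets (PiM UNIV ?M)"
      using sets_Uk[of k] by (simp add: Uk_def)
    fix A :: "'d \<Rightarrow> real set" assume A: "\<And>i. i \<in> UNIV \<Longrightarrow> A i \<in> sets (?M i)"
    then have Ab: "A i \<in> sets borel" for i by simp
    have PA: "PiE UNIV A \<in> sets Leb" unfolding Leb_def using Ab by (intro sets_PiM_I_finite) auto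
    have "emeasure (density Leb (indicator (cube k))) (PiE UNIV A) = (\<integral>\<^sup>+ x. indicator (cube k) x * indicator (PiE UNIV A) x \<partial>Leb)"
      using PA cube_sets[of k] by (subst emeasure_density) (auto intro: borel_measurable_indicator)
    also have "\<dots> = (\<integral>\<^sup>+ x. indicator (PiE UNIV (\<lambda>i. {real_of_int (k$i) ..< real_of_int (k$i) + 1} \<inter> A i)) x \<partial>Leb)"
      by (intro nn_integral_cong) (auto simp: indicator_def cube_def PiE_iff)
    also have "\<dots> = emeasure Leb (PiE UNIV (\<lambda>i. {real_of_int (k$i) ..< real_of_int (k$i) + 1} \<inter> A i))"
      unfolding Leb_def using Ab by (intro nn_integral_indicator sets_PiM_I_finite) auto
    also have "\<dots> = (\<Prod>i\<in>UNIV. emeasure lborel ({real_of_int (k$i) ..< real_of_int (k$i) + 1} \<inter> A i))"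
      unfolding Leb_def using Ab by (subst L.emeasure_PiM) auto
    also have "\<dots> = (\<Prod>i\<in>UNIV. emeasure (?M i) (A i))"
      using Ab by (intro prod.cong refl) (simp add: unif_def divide_ennreal_def)
    finally show "emeasure (density Leb (indicator (cube k))) (PiE UNIV A) = (\<Prod>i\<in>UNIV. emeasure (?M i) (A i))" .
  qed simp
  then show ?thesis by (simp add: Uk_def)
qed



definition FHit :: "nat \<Rightarrow> real \<Rightarrow> ('d::finite fatom \<Rightarrow> real) \<Rightarrow> bool" where
  "FHit n r s \<longleftrightarrow> hit n r (\<lambda>b. s (Inr b)) (\<lambda>i. s (Inl i))"

lemma PiM_nuF_Inl: "PiM UNIV (\<lambda>n. nuF p \<mu> k (Inl n)) = Uk k"
  by (simp add: nuF_def Uk_def)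

lemma PiM_nuF_Inr: "PiM UNIV (\<lambda>n. nuF p \<mu> k (Inr n)) = Qm p \<mu>"
  by (simp add: nuF_def Qm_def)

lemma Fpair:
  fixes k :: "int^'d::finite"
  assumes \<mu>: "prob_space \<mu>"
  shows "distr (FP p \<mu> k) (Uk k \<Otimes>\<^sub>M Qm p \<mu>) (\<lambda>s. (\<lambda>i. s (Inl i), \<lambda>b. s (Inr b))) = Uk k \<Otimes>\<^sub>M Qm p \<mu>"
proof -
  let ?F = "FP p \<mu> k" and ?Q = "Qm p \<mu> :: ('d tatom \<Rightarrow> real) measure"
  let ?M = "nuF p \<mu> k"
  let ?psi = "\<lambda>s. (\<lambda>i. s (Inl i), \<lambda>b. s (Inr b))"
  have mInl: "(\<lambda>s. \<lambda>i. s (Inl i)) \<in> PiM UNIV ?M \<rightarrow>\<^sub>M PiM UNIV (\<lambda>n. ?M (Inl n))"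
    by (rule measurable_PiM_single') (auto simp: space_PiM PiE_iff intro: measurable_component_singleton)
  have mInr: "(\<lambda>s. \<lambda>i. s (Inr i)) \<in> PiM UNIV ?M \<rightarrow>\<^sub>M PiM UNIV (\<lambda>n. ?M (Inr n))"
    by (rule measurable_PiM_single') (auto simp: space_PiM PiE_iff intro: measurable_component_singleton)
  have mpsi: "?psi \<in> ?F \<rightarrow>\<^sub>M Uk k \<Otimes>\<^sub>M ?Q"
    using mInl mInr unfolding FP_def PiM_nuF_Inl PiM_nuF_Inr by (rule measurable_Pair)
  show ?thesis
  proof (rule pair_measure_eqI[symmetric])
    show "sigma_finite_measure (Uk k)" using prob_Uk prob_space_imp_sigma_finite by blast
    show "sigma_finite_measure ?Q" using prob_Qm[OF \<mu>] prob_space_imp_sigma_finite by blast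
    show "sets (Uk k \<Otimes>\<^sub>M ?Q) = sets (distr ?F (Uk k \<Otimes>\<^sub>M ?Q) ?psi)" by simp
    fix A B assume A: "A \<in> sets (Uk k)" and B: "B \<in> sets ?Q"
    define S1 where "S1 = {h \<in> space (PiM (range Inl) ?M). (\<lambda>n. h (Inl n)) \<in> A}"
    define S2 where "S2 = {h \<in> space (PiM (range Inr) ?M). (\<lambda>n. h (Inr n)) \<in> B}"
    have S1: "S1 \<in> sets (PiM (range Inl) ?M)"
    proof -
      have mr: "(\<lambda>h. \<lambda>n. h (Inl n)) \<in> PiM (range Inl) ?M \<rightarrow>\<^sub>M Uk k"
        using meas_reindex[of Inl ?M] by (simp only: PiM_nuF_Inl)
      have "(\<lambda>h. \<lambda>n. h (Inl n)) -` A \<inter> space (PiM (range Inl) ?M) \<in> sets (PiM (range Inl) ?M)"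
        by (rule measurable_sets[OF mr A])
      moreover have "(\<lambda>h. \<lambda>n. h (Inl n)) -` A \<inter> space (PiM (range Inl) ?M) = S1" by (auto simp: S1_def)
      ultimately show ?thesis by simp
    qed
    have S2: "S2 \<in> sets (PiM (range Inr) ?M)"
    proof -
      have mr: "(\<lambda>h. \<lambda>n. h (Inr n)) \<in> PiM (range Inr) ?M \<rightarrow>\<^sub>M ?Q"
        using meas_reindex[of Inr ?M] by (simp only: PiM_nuF_Inr)
      have "(\<lambda>h. \<lambda>n. h (Inr n)) -` B \<inter> space (PiM (range Inr) ?M) \<in> sets (PiM (range Inr) ?M)"
        by (rule measurable_sets[OF mr B])
      moreover have "(\<lambda>h. \<lambda>n. h (Inr n)) -` B \<inter> space (PiM (range Inr) ?M) = S2" by (auto simp: S2_def)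
      ultimately show ?thesis by simp
    qed
    have dis: "range Inl \<inter> range Inr = {}" by auto
    have e1: "{f \<in> space ?F. restrict f (range Inl) \<in> S1} = {f \<in> space ?F. (\<lambda>n. f (Inl n)) \<in> A}"
      by (auto simp: S1_def space_PiM FP_def PiE_iff)
    have e2: "{f \<in> space ?F. restrict f (range Inr) \<in> S2} = {f \<in> space ?F. (\<lambda>n. f (Inr n)) \<in> B}"
      by (auto simp: S2_def space_PiM FP_def PiE_iff)
    have e12: "{f \<in> space ?F. restrict f (range Inl) \<in> S1 \<and> restrict f (range Inr) \<in> S2} =
       ?psi -` (A \<times> B) \<inter> space ?F"
      by (auto simp: S1_def S2_def space_PiM FP_def PiE_iff)
    have "emeasure (distr ?F (Uk k \<Otimes>\<^sub>M ?Q) ?psi) (A \<times> B) = emeasure ?F (?psi -` (A \<times> B) \<inter> space ?F)"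
      using A B mpsi by (intro emeasure_distr) auto
    also have "\<dots> = emeasure ?F {f \<in> space ?F. (\<lambda>n. f (Inl n)) \<in> A} * emeasure ?F {f \<in> space ?F. (\<lambda>n. f (Inr n)) \<in> B}"
      unfolding e12[symmetric] e1[symmetric] e2[symmetric] unfolding FP_def
      by (rule two_block[OF prob_nuF[OF \<mu>] dis S1 S2])
    also have "emeasure ?F {f \<in> space ?F. (\<lambda>n. f (Inl n)) \<in> A} = emeasure (Uk k) A"
      using emeasure_reindex[where M="?M" and g=Inl and S=A] prob_nuF[OF \<mu>] A
      unfolding FP_def PiM_nuF_Inl by simp blast
    also have "emeasure ?F {f \<in> space ?F. (\<lambda>n. f (Inr n)) \<in> B} = emeasure ?Q B"
      using emeasure_reindex[where M="?M" and g=Inr and S=B] prob_nuF[OF \<mu>] B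
      unfolding FP_def PiM_nuF_Inr by simp blast
    finally show "emeasure (Uk k) A * emeasure ?Q B = emeasure (distr ?F (Uk k \<Otimes>\<^sub>M ?Q) ?psi) (A \<times> B)" by simp
  qed
qed



definition gQ :: "nat pmf \<Rightarrow> real measure \<Rightarrow> nat \<Rightarrow> real \<Rightarrow> ('d::finite \<Rightarrow> real) \<Rightarrow> ennreal" where
  "gQ p \<mu> n r x = emeasure (Qm p \<mu> :: ('d tatom \<Rightarrow> real) measure) {t \<in> space (Qm p \<mu>). hit n r t x}"

lemma HQ_gQ: "HQ p \<mu> n r TYPE('d::finite) = (\<integral>\<^sup>+ x. gQ p \<mu> n r (x :: 'd \<Rightarrow> real) \<partial>Leb)"
  by (simp add: HQ_def gQ_def)

lemma meas_hit_LQ: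
  assumes "sets \<mu> = sets borel" and "sets N = sets (Leb :: ('d::finite \<Rightarrow> real) measure)"
  shows "Measurable.pred (N \<Otimes>\<^sub>M Qm p \<mu>) (\<lambda>z. hit n r (snd z) (fst z :: 'd \<Rightarrow> real))"
proof (rule meas_hit)
  show "snd \<in> N \<Otimes>\<^sub>M Qm p \<mu> \<rightarrow>\<^sub>M PiM UNIV (nuT p \<mu>)" unfolding Qm_def by (rule measurable_snd)
  have "fst \<in> N \<Otimes>\<^sub>M Qm p \<mu> \<rightarrow>\<^sub>M N" by (rule measurable_fst)
  then show "fst \<in> N \<Otimes>\<^sub>M Qm p \<mu> \<rightarrow>\<^sub>M Leb"
    using measurable_cong_sets[OF refl assms(2), of "N \<Otimes>\<^sub>M Qm p \<mu>"] by blast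
qed (rule sets_nuT[OF assms(1)])

lemma gQ_meas:
  fixes \<mu> :: "real measure"
  assumes \<mu>: "prob_space \<mu>" "sets \<mu> = sets borel"
  shows "gQ p \<mu> n r \<in> borel_measurable (Leb :: ('d::finite \<Rightarrow> real) measure)"
proof -
  interpret Q: sigma_finite_measure "Qm p \<mu> :: ('d tatom \<Rightarrow> real) measure" by (rule sf_Qm[OF \<mu>(1)])
  let ?S = "{z \<in> space (Leb \<Otimes>\<^sub>M Qm p \<mu>). hit n r (snd z) (fst z :: 'd \<Rightarrow> real)}"
  have "?S \<in> sets (Leb \<Otimes>\<^sub>M Qm p \<mu>)" using meas_hit_LQ[OF \<mu>(2) refl] by measurable
  then have "(\<lambda>x. emeasure (Qm p \<mu>) (Pair x -` ?S)) \<in> borel_measurable Leb"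
    by (rule Q.measurable_emeasure_Pair)
  moreover have "Pair x -` ?S = {t \<in> space (Qm p \<mu>). hit n r t x}" for x
    using \<mu> by (auto simp: space_pair_measure)
  ultimately show ?thesis by (simp add: gQ_def[abs_def])
qed

lemma ak:
  fixes \<mu> :: "real measure" and k :: "int^'d::finite"
  assumes \<mu>: "prob_space \<mu>" "sets \<mu> = sets borel"
  shows "emeasure (FP p \<mu> k) {s \<in> space (FP p \<mu> k). FHit n r s} = (\<integral>\<^sup>+ x. indicator (cube k) x * gQ p \<mu> n r x \<partial>Leb)"
proof -
  let ?F = "FP p \<mu> k" and ?Q = "Qm p \<mu> :: ('d tatom \<Rightarrow> real) measure"
  let ?psi = "\<lambda>s. (\<lambda>i. s (Inl i), \<lambda>b. s (Inr b))"
  interpret Q: sigma_finite_measure ?Q by (rule sf_Qm[OF \<mu>(1)])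
  let ?X = "{z \<in> space (Uk k \<Otimes>\<^sub>M ?Q). hit n r (snd z) (fst z)}"
  have X: "?X \<in> sets (Uk k \<Otimes>\<^sub>M ?Q)" using meas_hit_LQ[OF \<mu>(2) sets_Uk] by measurable
  have mInl: "(\<lambda>s. \<lambda>i. s (Inl i)) \<in> PiM UNIV (nuF p \<mu> k) \<rightarrow>\<^sub>M PiM UNIV (\<lambda>n. nuF p \<mu> k (Inl n))"
    by (rule measurable_PiM_single') (auto simp: space_PiM PiE_iff intro: measurable_component_singleton)
  have mInr: "(\<lambda>s. \<lambda>i. s (Inr i)) \<in> PiM UNIV (nuF p \<mu> k) \<rightarrow>\<^sub>M PiM UNIV (\<lambda>n. nuF p \<mu> k (Inr n))"
    by (rule measurable_PiM_single') (auto simp: space_PiM PiE_iff intro: measurable_component_singleton)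
  have mpsi: "?psi \<in> ?F \<rightarrow>\<^sub>M Uk k \<Otimes>\<^sub>M ?Q"
    using mInl mInr unfolding FP_def PiM_nuF_Inl PiM_nuF_Inr by (rule measurable_Pair)
  have "?psi -` ?X \<inter> space ?F = {s \<in> space ?F. FHit n r s}"
    using mpsi by (auto simp: FHit_def dest: measurable_space)
  then have "emeasure ?F {s \<in> space ?F. FHit n r s} = emeasure (distr ?F (Uk k \<Otimes>\<^sub>M ?Q) ?psi) ?X"
    using X mpsi by (simp add: emeasure_distr)
  also have "\<dots> = emeasure (Uk k \<Otimes>\<^sub>M ?Q) ?X" by (simp add: Fpair[OF \<mu>(1)])
  also have "\<dots> = (\<integral>\<^sup>+ u. emeasure ?Q (Pair u -` ?X) \<partial>Uk k)"
    by (rule Q.emeasure_pair_measure_alt[OF X])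
  also have "\<dots> = (\<integral>\<^sup>+ u. gQ p \<mu> n r u \<partial>Uk k)"
  proof (rule nn_integral_cong)
    fix u assume "u \<in> space (Uk k)"
    then have "Pair u -` ?X = {t \<in> space ?Q. hit n r t u}" using \<mu> by (auto simp: space_pair_measure)
    then show "emeasure ?Q (Pair u -` ?X) = gQ p \<mu> n r u" by (simp add: gQ_def)
  qed
  also have "\<dots> = (\<integral>\<^sup>+ x. indicator (cube k) x * gQ p \<mu> n r x \<partial>Leb)"
    unfolding Uk_density using gQ_meas[OF \<mu>] cube_sets[of k]
    by (subst nn_integral_density) (auto intro: borel_measurable_indicator)
  finally show ?thesis .
qed



definition CG :: "nat \<Rightarrow> real \<Rightarrow> int^'d \<Rightarrow> (('d::finite) atom \<Rightarrow> real) \<Rightarrow> bool" where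
  "CG n r k f \<longleftrightarrow> (\<forall>j. j < nat \<lfloor>f (Inl k)\<rfloor> \<longrightarrow> \<not> FHit n r (\<lambda>b. f (Inr ((k,j), b))))"

lemma prob_nu: "prob_space \<mu> \<Longrightarrow> prob_space (nu p \<mu> a)"
  by (auto simp: nu_def prob_PR prob_nuF split: sum.splits prod.splits)

lemma sets_nu: "sets \<mu> = sets borel \<Longrightarrow> sets (nu p \<mu> a) = sets borel"
  by (auto simp: nu_def sets_nuF split: sum.splits prod.splits)

lemma nu_Inr[simp]: "nu p \<mu> (Inr ((k,j),b)) = nuF p \<mu> k b"
  by (simp add: nu_def)

lemma nu_Inl[simp]: "nu p \<mu> (Inl k) = PR (poisson_pmf 1)"
  by (simp add: nu_def)

lemma FHit_meas:
  fixes \<mu> :: "real measure" and k :: "int^'d::finite"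
  assumes \<mu>: "sets \<mu> = sets borel" and \<phi>: "\<phi> \<in> M \<rightarrow>\<^sub>M FP p \<mu> k"
  shows "Measurable.pred M (\<lambda>x. FHit n r (\<phi> x))"
proof -
  have mInl: "(\<lambda>s. \<lambda>i. s (Inl i)) \<in> PiM UNIV (nuF p \<mu> k) \<rightarrow>\<^sub>M PiM UNIV (\<lambda>n. nuF p \<mu> k (Inl n))"
    by (rule measurable_PiM_single') (auto simp: space_PiM PiE_iff intro: measurable_component_singleton)
  have mInr: "(\<lambda>s. \<lambda>i. s (Inr i)) \<in> PiM UNIV (nuF p \<mu> k) \<rightarrow>\<^sub>M PiM UNIV (\<lambda>n. nuF p \<mu> k (Inr n))"
    by (rule measurable_PiM_single') (auto simp: space_PiM PiE_iff intro: measurable_component_singleton)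
  have m1: "(\<lambda>x. \<lambda>b. \<phi> x (Inr b)) \<in> M \<rightarrow>\<^sub>M PiM UNIV (nuT p \<mu>)"
    using measurable_compose[OF \<phi>[unfolded FP_def] mInr[unfolded PiM_nuF_Inr]] by (simp add: FP_def Qm_def)
  have m2: "(\<lambda>x. \<lambda>i. \<phi> x (Inl i)) \<in> M \<rightarrow>\<^sub>M Uk k"
    using measurable_compose[OF \<phi>[unfolded FP_def] mInl[unfolded PiM_nuF_Inl]] by (simp add: FP_def)
  then have m2': "(\<lambda>x. \<lambda>i. \<phi> x (Inl i)) \<in> M \<rightarrow>\<^sub>M Leb"
    using measurable_cong_sets[OF refl sets_Uk, of M k] by blast
  show ?thesis unfolding FHit_def
    by (rule meas_hit[OF m1 m2']) (rule sets_nuT[OF \<mu>])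
qed

lemma fam_meas:
  assumes "\<And>b. Inr ((k,j),b) \<in> B"
  shows "(\<lambda>f. \<lambda>b. f (Inr ((k,j),b))) \<in> PiM B (nu p \<mu>) \<rightarrow>\<^sub>M FP p \<mu> k"
  unfolding FP_def
proof (rule measurable_PiM_single')
  fix b
  show "(\<lambda>f. f (Inr ((k, j), b))) \<in> PiM B (nu p \<mu>) \<rightarrow>\<^sub>M nuF p \<mu> k b"
    using measurable_component_singleton[of "Inr ((k,j),b)" B "nu p \<mu>"] assms by simp
qed (use assms in \<open>auto simp: space_PiM PiE_iff, metis nu_Inr\<close>)

lemma Nk_meas:
  assumes "Inl k \<in> B"
  shows "(\<lambda>f. nat \<lfloor>f (Inl k)\<rfloor>) \<in> PiM B (nu p \<mu>) \<rightarrow>\<^sub>M count_space UNIV"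
proof -
  have "(\<lambda>f. f (Inl k)) \<in> PiM B (nu p \<mu>) \<rightarrow>\<^sub>M nu p \<mu> (Inl k)"
    using assms by (rule measurable_component_singleton)
  then have [measurable]: "(\<lambda>f. f (Inl k)) \<in> borel_measurable (PiM B (nu p \<mu>))"
    by (rule meas_borel_cong) simp
  show ?thesis by measurable
qed

lemma CG_meas:
  fixes \<mu> :: "real measure" and k :: "int^'d::finite"
  assumes \<mu>: "sets \<mu> = sets borel" and B: "Inl k \<in> B" "\<And>j b. Inr ((k,j),b) \<in> B"
  shows "Measurable.pred (PiM B (nu p \<mu>)) (CG n r k)"
proof -
  have [measurable]: "(\<lambda>f. nat \<lfloor>f (Inl k)\<rfloor>) \<in> PiM B (nu p \<mu>) \<rightarrow>\<^sub>M count_space UNIV"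
    by (rule Nk_meas[OF B(1)])
  have [measurable]: "Measurable.pred (PiM B (nu p \<mu>)) (\<lambda>f. FHit n r (\<lambda>b. f (Inr ((k,j), b))))" for j
    by (rule FHit_meas[OF \<mu> fam_meas]) (rule B(2))
  show ?thesis unfolding CG_def by measurable
qed



definition Pm :: "nat pmf \<Rightarrow> real measure \<Rightarrow> (('d::finite) atom \<Rightarrow> real) measure" where
  "Pm p \<mu> = PiM UNIV (nu p \<mu>)"

lemma emeasure_Pm_single:
  assumes \<mu>: "prob_space \<mu>" and X: "X \<in> sets (nu p \<mu> a)"
  shows "emeasure (Pm p \<mu>) {f \<in> space (Pm p \<mu>). f a \<in> X} = emeasure (nu p \<mu> a) X"
proof -
  interpret Pp: product_prob_space "nu p \<mu>" UNIV using pps_UNIV[OF prob_nu[OF \<mu>]] .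
  show ?thesis unfolding Pm_def using X by (subst Pp.emeasure_PiM_Collect_single) auto
qed

lemma emeasure_Pm_fam:
  fixes \<mu> :: "real measure" and k :: "int^'d::finite"
  assumes \<mu>: "prob_space \<mu>" and S: "S \<in> sets (FP p \<mu> k)"
  shows "emeasure (Pm p \<mu>) {f \<in> space (Pm p \<mu>). (\<lambda>b. f (Inr ((k,j),b))) \<in> S} = emeasure (FP p \<mu> k) S"
proof -
  have inj: "inj (\<lambda>b. Inr ((k,j),b) :: 'd atom)" by (auto simp: inj_def)
  have "PiM UNIV (\<lambda>b. nu p \<mu> (Inr ((k,j),b) :: 'd atom)) = FP p \<mu> k" by (simp add: FP_def)
  then show ?thesis
    using emeasure_reindex[where M="nu p \<mu>" and g="\<lambda>b. Inr ((k,j),b) :: 'd atom" and S=S] prob_nu[OF \<mu>] inj S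
    unfolding Pm_def by simp blast
qed

lemma pmf_poisson1: "emeasure (PR (poisson_pmf 1)) {a \<in> space (PR (poisson_pmf 1)). nat \<lfloor>a\<rfloor> = m} = ennreal (exp (-1) / fact m)"
proof -
  have sp: "space (PR q) = UNIV" for q by (simp add: PR_def)
  have "{a::real. nat \<lfloor>a\<rfloor> = m} \<in> sets borel" by measurable
  then have "emeasure (PR (poisson_pmf 1)) {a. nat \<lfloor>a\<rfloor> = m}
      = emeasure (measure_pmf (poisson_pmf 1)) (real -` {a. nat \<lfloor>a\<rfloor> = m} \<inter> space (measure_pmf (poisson_pmf 1)))"
    unfolding PR_def by (intro emeasure_distr) auto
  moreover have "{a \<in> space (PR (poisson_pmf 1)). nat \<lfloor>a\<rfloor> = m} = {a. nat \<lfloor>a\<rfloor> = m}" by (simp add: sp)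
  ultimately have "emeasure (PR (poisson_pmf 1)) {a \<in> space (PR (poisson_pmf 1)). nat \<lfloor>a\<rfloor> = m}
      = emeasure (measure_pmf (poisson_pmf 1)) (real -` {a. nat \<lfloor>a\<rfloor> = m} \<inter> space (measure_pmf (poisson_pmf 1)))"
    by simp
  also have "real -` {a. nat \<lfloor>a\<rfloor> = m} \<inter> space (measure_pmf (poisson_pmf 1)) = {m}" by auto
  also have "emeasure (measure_pmf (poisson_pmf 1)) {m} = ennreal (pmf (poisson_pmf 1) m)"
    by (simp add: emeasure_pmf_single)
  finally show ?thesis by simp
qed



lemma measure_eq_from_emeasure:
  "emeasure M A = emeasure N B \<Longrightarrow> measure M A = measure N B"
  by (simp add: measure_def)

lemma prob_FP: "prob_space \<mu> \<Longrightarrow> prob_space (FP p \<mu> k)"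
  unfolding FP_def by (rule prob_space_PiM) (rule prob_nuF)

lemma prob_Pm: "prob_space \<mu> \<Longrightarrow> prob_space (Pm p \<mu>)"
  unfolding Pm_def by (rule prob_space_PiM) (rule prob_nu)

lemma space_nuF: "sets \<mu> = sets borel \<Longrightarrow> space (nuF p \<mu> k a) = UNIV"
  using sets_eq_imp_space_eq[OF sets_nuF] by simp

lemma space_nu: "sets \<mu> = sets borel \<Longrightarrow> space (nu p \<mu> a) = UNIV"
  using sets_eq_imp_space_eq[OF sets_nu] by simp

lemma space_PR[simp]: "space (PR q) = UNIV" by (simp add: PR_def)

lemma Am_measure:
  fixes \<mu> :: "real measure" and k :: "int^'d::finite"
  assumes \<mu>: "prob_space \<mu>" "sets \<mu> = sets borel"
  shows "measure (Pm p \<mu>) {f \<in> space (Pm p \<mu>). nat \<lfloor>f (Inl k)\<rfloor> = m \<and> (\<forall>j<m. \<not> FHit n r (\<lambda>b. f (Inr ((k,j),b))))}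
     = exp (-1) / fact m * (1 - measure (FP p \<mu> k) {s \<in> space (FP p \<mu> k). FHit n r s}) ^ m"
proof -
  let ?P = "Pm p \<mu> :: ('d atom \<Rightarrow> real) measure" and ?nu = "nu p \<mu> :: 'd atom \<Rightarrow> real measure"
  let ?a = "measure (FP p \<mu> k) {s \<in> space (FP p \<mu> k). FHit n r s}"
  define Bl :: "nat option \<Rightarrow> 'd atom set" where
    "Bl l = (case l of None \<Rightarrow> {Inl k} | Some j \<Rightarrow> range (\<lambda>b. Inr ((k,j),b)))" for l
  define S where "S l = (case l of None \<Rightarrow> {h \<in> space (PiM {Inl k} ?nu). nat \<lfloor>h (Inl k)\<rfloor> = m}
      | Some j \<Rightarrow> {h \<in> space (PiM (Bl (Some j)) ?nu). \<not> FHit n r (\<lambda>b. h (Inr ((k,j),b)))})" for l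
  define L where "L = insert None (Some ` {..<m})"
  have finL: "finite L" by (simp add: L_def)
  have disj: "disjoint_family_on Bl L"
    by (auto simp: disjoint_family_on_def Bl_def split: option.splits)
  have Smeas: "S l \<in> sets (PiM (Bl l) ?nu)" if "l \<in> L" for l
  proof (cases l)
    case None
    have [measurable]: "(\<lambda>f. nat \<lfloor>f (Inl k)\<rfloor>) \<in> PiM {Inl k} ?nu \<rightarrow>\<^sub>M count_space UNIV"
      by (rule Nk_meas) simp
    show ?thesis unfolding None S_def Bl_def by simp measurable
  next
    case (Some j)
    have [measurable]: "Measurable.pred (PiM (Bl (Some j)) ?nu) (\<lambda>h. FHit n r (\<lambda>b. h (Inr ((k,j),b))))"
      by (rule FHit_meas[OF \<mu>(2) fam_meas]) (simp add: Bl_def)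
    show ?thesis unfolding Some S_def by simp measurable
  qed
  have block: "measure ?P {f \<in> space ?P. \<forall>l\<in>L. restrict f (Bl l) \<in> S l}
      = (\<Prod>l\<in>L. measure ?P {f \<in> space ?P. restrict f (Bl l) \<in> S l})"
    unfolding Pm_def by (rule block_indep[OF prob_nu[OF \<mu>(1)] finL disj Smeas])
  have seteq: "{f \<in> space ?P. \<forall>l\<in>L. restrict f (Bl l) \<in> S l}
      = {f \<in> space ?P. nat \<lfloor>f (Inl k)\<rfloor> = m \<and> (\<forall>j<m. \<not> FHit n r (\<lambda>b. f (Inr ((k,j),b))))}"
    using \<mu>(2) by (auto simp: L_def S_def Bl_def space_PiM PiE_iff Pm_def space_nuF)
  have pN: "measure ?P {f \<in> space ?P. restrict f (Bl None) \<in> S None} = exp (-1) / fact m"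
  proof -
    have "{f \<in> space ?P. restrict f (Bl None) \<in> S None} = {f \<in> space ?P. f (Inl k) \<in> {a \<in> space (PR (poisson_pmf 1)). nat \<lfloor>a\<rfloor> = m}}"
      by (auto simp: S_def Bl_def space_PiM PiE_iff Pm_def PR_def)
    moreover have "{a \<in> space (PR (poisson_pmf 1)). nat \<lfloor>a\<rfloor> = m} \<in> sets (?nu (Inl k))"
      by (simp add: PR_def) measurable
    ultimately have "emeasure ?P {f \<in> space ?P. restrict f (Bl None) \<in> S None} = ennreal (exp (-1) / fact m)"
      using emeasure_Pm_single[OF \<mu>(1), of "{a \<in> space (PR (poisson_pmf 1)). nat \<lfloor>a\<rfloor> = m}" p "Inl k"]
      using pmf_poisson1[of m] by simp
    then show ?thesis by (simp add: measure_def)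
  qed
  have pS: "measure ?P {f \<in> space ?P. restrict f (Bl (Some j)) \<in> S (Some j)} = 1 - ?a" for j
  proof -
    interpret F: prob_space "FP p \<mu> k" by (rule prob_FP[OF \<mu>(1)])
    have Hm: "{s \<in> space (FP p \<mu> k). FHit n r s} \<in> sets (FP p \<mu> k)"
    proof -
      have "Measurable.pred (FP p \<mu> k) (\<lambda>s. FHit n r ((\<lambda>x. x) s))"
        by (rule FHit_meas[OF \<mu>(2), where p=p and k=k]) simp
      then show ?thesis by simp
    qed
    have "{f \<in> space ?P. restrict f (Bl (Some j)) \<in> S (Some j)} = {f \<in> space ?P. (\<lambda>b. f (Inr ((k,j),b))) \<in> space (FP p \<mu> k) - {s \<in> space (FP p \<mu> k). FHit n r s}}"
      by (auto simp: S_def Bl_def space_PiM PiE_iff Pm_def FP_def)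
    then have "emeasure ?P {f \<in> space ?P. restrict f (Bl (Some j)) \<in> S (Some j)} = emeasure (FP p \<mu> k) (space (FP p \<mu> k) - {s \<in> space (FP p \<mu> k). FHit n r s})"
      using emeasure_Pm_fam[OF \<mu>(1), of "space (FP p \<mu> k) - {s \<in> space (FP p \<mu> k). FHit n r s}" p k j] Hm by simp
    then have "measure ?P {f \<in> space ?P. restrict f (Bl (Some j)) \<in> S (Some j)} = measure (FP p \<mu> k) (space (FP p \<mu> k) - {s \<in> space (FP p \<mu> k). FHit n r s})"
      by (rule measure_eq_from_emeasure)
    also have "\<dots> = 1 - ?a" using F.prob_compl[OF Hm] by simp
    finally show ?thesis .
  qed
  have "(\<Prod>l\<in>L. measure ?P {f \<in> space ?P. restrict f (Bl l) \<in> S l})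
      = measure ?P {f \<in> space ?P. restrict f (Bl None) \<in> S None} * (\<Prod>j<m. measure ?P {f \<in> space ?P. restrict f (Bl (Some j)) \<in> S (Some j)})"
    unfolding L_def by (subst prod.insert) (auto simp: prod.reindex)
  also have "\<dots> = exp (-1) / fact m * (1 - ?a) ^ m" by (simp add: pN pS)
  finally show ?thesis using block seteq by simp
qed



definition ak :: "nat pmf \<Rightarrow> real measure \<Rightarrow> nat \<Rightarrow> real \<Rightarrow> int^'d \<Rightarrow> real" where
  "ak p \<mu> n r k = measure (FP p \<mu> k :: ('d::finite fatom \<Rightarrow> real) measure) {s \<in> space (FP p \<mu> k). FHit n r s}"

lemma CG_measure:
  fixes \<mu> :: "real measure" and k :: "int^'d::finite"
  assumes \<mu>: "prob_space \<mu>" "sets \<mu> = sets borel"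
  shows "measure (Pm p \<mu>) {f \<in> space (Pm p \<mu>). CG n r k f} = exp (- ak p \<mu> n r k)"
proof -
  let ?P = "Pm p \<mu> :: ('d atom \<Rightarrow> real) measure"
  let ?a = "ak p \<mu> n r k"
  interpret P: prob_space ?P by (rule prob_Pm[OF \<mu>(1)])
  define A where "A m = {f \<in> space ?P. nat \<lfloor>f (Inl k)\<rfloor> = m \<and> (\<forall>j<m. \<not> FHit n r (\<lambda>b. f (Inr ((k,j),b))))}" for m
  have [measurable]: "(\<lambda>f. nat \<lfloor>f (Inl k)\<rfloor>) \<in> ?P \<rightarrow>\<^sub>M count_space UNIV"
    unfolding Pm_def by (rule Nk_meas) simp
  have [measurable]: "Measurable.pred ?P (\<lambda>f. FHit n r (\<lambda>b. f (Inr ((k,j),b))))" for j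
    unfolding Pm_def by (rule FHit_meas[OF \<mu>(2) fam_meas]) simp
  have Ameas: "range A \<subseteq> sets ?P" unfolding A_def by auto
  have Adisj: "disjoint_family A" by (auto simp: disjoint_family_on_def A_def)
  have Aun: "(\<Union>m. A m) = {f \<in> space ?P. CG n r k f}" by (auto simp: A_def CG_def)
  have s1: "(\<lambda>m. measure ?P (A m)) sums measure ?P {f \<in> space ?P. CG n r k f}"
    using P.finite_measure_UNION[OF Ameas Adisj] by (simp add: Aun)
  have "(\<lambda>m. (1 - ?a) ^ m /\<^sub>R fact m) sums exp (1 - ?a)" by (rule exp_converges)
  then have "(\<lambda>m. exp (-1) * ((1 - ?a) ^ m /\<^sub>R fact m)) sums (exp (-1) * exp (1 - ?a))" by (rule sums_mult)
  moreover have "measure ?P (A m) = exp (-1) * ((1 - ?a) ^ m /\<^sub>R fact m)" for m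
    unfolding A_def using Am_measure[OF \<mu>, of p k m n r] by (simp add: ak_def divide_inverse)
  ultimately have s2: "(\<lambda>m. measure ?P (A m)) sums (exp (-1) * exp (1 - ?a))" by simp
  have "exp (-1) * exp (1 - ?a) = exp (- ?a)" by (simp add: exp_add[symmetric])
  then show ?thesis using sums_unique2[OF s1 s2] by simp
qed

definition Cb :: "int^'d \<Rightarrow> ('d::finite) atom set" where
  "Cb k = {x. case x of Inl k' \<Rightarrow> k' = k | Inr ((k',j),b) \<Rightarrow> k' = k}"

lemma CGs_measure:
  fixes \<mu> :: "real measure" and K :: "(int^'d::finite) set"
  assumes \<mu>: "prob_space \<mu>" "sets \<mu> = sets borel" and K: "finite K"
  shows "measure (Pm p \<mu>) {f \<in> space (Pm p \<mu>). \<forall>k\<in>K. CG n r k f} = (\<Prod>k\<in>K. exp (- ak p \<mu> n r k))"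
proof -
  let ?P = "Pm p \<mu> :: ('d atom \<Rightarrow> real) measure" and ?nu = "nu p \<mu> :: 'd atom \<Rightarrow> real measure"
  define S where "S k = {h \<in> space (PiM (Cb k) ?nu). CG n r k h}" for k
  have disj: "disjoint_family_on Cb K"
  proof (unfold disjoint_family_on_def, intro ballI impI)
    fix m n :: "int^'d" assume "m \<noteq> n"
    show "Cb m \<inter> Cb n = {}"
    proof (rule ccontr)
      assume "Cb m \<inter> Cb n \<noteq> {}"
      then obtain x where x: "x \<in> Cb m" "x \<in> Cb n" by blast
      show False
      proof (cases x)
        case (Inl k') then show False using x \<open>m \<noteq> n\<close> by (simp add: Cb_def)
      next
        case (Inr y) then obtain k' j b where "x = Inr ((k',j),b)" by (metis prod.collapse)
        then show False using x \<open>m \<noteq> n\<close> by (simp add: Cb_def)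
      qed
    qed
  qed
  have Smeas: "S k \<in> sets (PiM (Cb k) ?nu)" for k
  proof -
    have [measurable]: "Measurable.pred (PiM (Cb k) ?nu) (CG n r k)"
      by (rule CG_meas[OF \<mu>(2)]) (auto simp: Cb_def)
    show ?thesis unfolding S_def by measurable
  qed
  have eq: "restrict f (Cb k) \<in> S k \<longleftrightarrow> CG n r k f" if "f \<in> space ?P" for f k
    using that \<mu>(2) by (auto simp: S_def Cb_def CG_def space_PiM PiE_iff Pm_def space_nu)
  have "measure ?P {f \<in> space ?P. \<forall>k\<in>K. restrict f (Cb k) \<in> S k} = (\<Prod>k\<in>K. measure ?P {f \<in> space ?P. restrict f (Cb k) \<in> S k})"
    unfolding Pm_def by (rule block_indep[OF prob_nu[OF \<mu>(1)] K disj Smeas])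
  moreover have "{f \<in> space ?P. \<forall>k\<in>K. restrict f (Cb k) \<in> S k} = {f \<in> space ?P. \<forall>k\<in>K. CG n r k f}"
    using eq by auto
  moreover have "{f \<in> space ?P. restrict f (Cb k) \<in> S k} = {f \<in> space ?P. CG n r k f}" for k
    using eq by auto
  ultimately show ?thesis by (simp add: CG_measure[OF \<mu>])
qed



lemma exp_neg_lim:
  assumes s: "\<And>M. 0 \<le> s M" and lim: "(\<lambda>M. ennreal (s M)) \<longlonglongrightarrow> h"
  shows "(\<lambda>M. exp (- s M)) \<longlonglongrightarrow> exp_neg_ennreal h"
proof (cases h)
  case (real h')
  then have "s \<longlonglongrightarrow> h'" using lim s by (intro tendsto_ennrealD) auto
  then have "(\<lambda>M. exp (- s M)) \<longlonglongrightarrow> exp (- h')" by (intro tendsto_intros)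
  then show ?thesis using real by (simp add: exp_neg_ennreal_def)
next
  case top
  have "filterlim s at_top sequentially"
    unfolding filterlim_at_top
  proof
    fix Z :: real
    have "ennreal (max Z 0) < h" using top by simp
    then have "eventually (\<lambda>M. ennreal (max Z 0) < ennreal (s M)) sequentially"
      using lim by (rule order_tendstoD(1)[rotated])
    then show "eventually (\<lambda>M. Z \<le> s M) sequentially"
    proof eventually_elim
      fix M assume "ennreal (max Z 0) < ennreal (s M)"
      then have "max Z 0 < s M" by (subst (asm) ennreal_less_iff) auto
      then show "Z \<le> s M" by simp
    qed
  qed
  then have "filterlim (\<lambda>M. - s M) at_bot sequentially"
    by (rule filterlim_compose[OF filterlim_uminus_at_bot_at_top])
  then have "(\<lambda>M. exp (- s M)) \<longlonglongrightarrow> 0"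
    by (rule filterlim_compose[OF exp_at_bot])
  then show ?thesis using top by (simp add: exp_neg_ennreal_def)
qed

definition kx :: "('d::finite \<Rightarrow> real) \<Rightarrow> int^'d" where "kx x = (\<chi> i. \<lfloor>x i\<rfloor>)"

lemma cube_iff: "x \<in> cube k \<longleftrightarrow> k = kx x"
  unfolding cube_def kx_def by (auto simp: vec_eq_iff floor_eq_iff PiE_iff) (metis floor_unique)

lemma sum_ind_cube:
  assumes "finite K" shows "(\<Sum>k\<in>K. indicator (cube k) x :: ennreal) = (if kx x \<in> K then 1 else 0)"
proof -
  have "(\<Sum>k\<in>K. indicator (cube k) x :: ennreal) = (\<Sum>k\<in>K. if k = kx x then 1 else 0)"
    by (intro sum.cong) (auto simp: indicator_def cube_iff)
  also have "\<dots> = (if kx x \<in> K then 1 else 0)"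
    using assms by (auto simp: sum.delta')
  finally show ?thesis .
qed



lemma ak_nn: "prob_space \<mu> \<Longrightarrow> sets \<mu> = sets borel \<Longrightarrow>
   ennreal (ak p \<mu> n r k) = (\<integral>\<^sup>+ x. indicator (cube k) x * gQ p \<mu> n r x \<partial>Leb)"
proof -
  assume \<mu>: "prob_space \<mu>" "sets \<mu> = sets borel"
  interpret F: prob_space "FP p \<mu> k" by (rule prob_FP[OF \<mu>(1)])
  show ?thesis unfolding ak_def using ak[OF \<mu>, of p k n r] by (simp add: F.emeasure_eq_measure)
qed

lemma Good_measure:
  fixes \<mu> :: "real measure"
  assumes \<mu>: "prob_space \<mu>" "sets \<mu> = sets borel"
  shows "measure (Pm p \<mu> :: (('d::finite) atom \<Rightarrow> real) measure) {f \<in> space (Pm p \<mu>). \<forall>k. CG n r k f}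
     = exp_neg_ennreal (HQ p \<mu> n r TYPE('d))"
proof -
  let ?P = "Pm p \<mu> :: ('d atom \<Rightarrow> real) measure"
  interpret P: prob_space ?P by (rule prob_Pm[OF \<mu>(1)])
  define KM :: "nat \<Rightarrow> (int^'d) set" where "KM M = to_nat -` {..<M}" for M
  have finKM: "finite (KM M)" for M unfolding KM_def by (rule finite_vimageI) auto
  define G where "G M = {f \<in> space ?P. \<forall>k\<in>KM M. CG n r k f}" for M
  have CGm[measurable]: "Measurable.pred ?P (CG n r k)" for k
    unfolding Pm_def by (rule CG_meas[OF \<mu>(2)]) auto
  have Gm: "range G \<subseteq> sets ?P"
  proof -
    have "G M \<in> sets ?P" for M unfolding G_def using finKM[of M] by measurable
    then show ?thesis by auto
  qed
  have Gdec: "decseq G" unfolding decseq_def G_def KM_def by auto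
  have Gint: "(\<Inter>M. G M) = {f \<in> space ?P. \<forall>k. CG n r k f}"
  proof
    show "(\<Inter>M. G M) \<subseteq> {f \<in> space ?P. \<forall>k. CG n r k f}"
    proof
      fix f assume f: "f \<in> (\<Inter>M. G M)"
      { fix k :: "int^'d" have "f \<in> G (Suc (to_nat k))" using f by blast
        then have "CG n r k f" unfolding G_def KM_def by auto }
      moreover have "f \<in> space ?P" using f unfolding G_def by auto
      ultimately show "f \<in> {f \<in> space ?P. \<forall>k. CG n r k f}" by auto
    qed
  qed (auto simp: G_def)
  have lim1: "(\<lambda>M. measure ?P (G M)) \<longlonglongrightarrow> measure ?P {f \<in> space ?P. \<forall>k. CG n r k f}"
    using Lim_measure_decseq[OF Gm Gdec] by (simp add: Gint)
  define s where "s M = (\<Sum>k\<in>KM M. ak p \<mu> n r k)" for M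
  have s_nn: "0 \<le> s M" for M unfolding s_def ak_def by (intro sum_nonneg) simp
  have mG: "measure ?P (G M) = exp (- s M)" for M
  proof -
    have "measure ?P (G M) = (\<Prod>k\<in>KM M. exp (- ak p \<mu> n r k))"
      unfolding G_def by (rule CGs_measure[OF \<mu> finKM])
    also have "\<dots> = exp (\<Sum>k\<in>KM M. - ak p \<mu> n r k)" by (rule exp_sum[symmetric, OF finKM])
    finally show ?thesis by (simp add: s_def sum_negf)
  qed
  define F where "F M x = (\<Sum>k\<in>KM M. indicator (cube k) x) * gQ p \<mu> n r x" for M and x :: "'d \<Rightarrow> real"
  have F_if: "F M x = (if to_nat (kx x) < M then gQ p \<mu> n r x else 0)" for M x
    unfolding F_def sum_ind_cube[OF finKM] by (simp add: KM_def)
  have gQm[measurable]: "gQ p \<mu> n r \<in> borel_measurable Leb" by (rule gQ_meas[OF \<mu>])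
  have Fm: "F M \<in> borel_measurable Leb" for M
  proof -
    have [measurable]: "cube k \<in> sets Leb" for k by (rule cube_sets)
    show ?thesis unfolding F_def[abs_def] by measurable
  qed
  have Finc: "incseq F" unfolding incseq_def le_fun_def F_if by auto
  have Fsup: "(SUP M. F M x) = gQ p \<mu> n r x" for x
  proof (rule antisym)
    show "(SUP M. F M x) \<le> gQ p \<mu> n r x" by (rule SUP_least) (simp add: F_if)
    show "gQ p \<mu> n r x \<le> (SUP M. F M x)"
      by (rule SUP_upper2[of "Suc (to_nat (kx x))"]) (auto simp: F_if)
  qed
  have sF: "ennreal (s M) = (\<integral>\<^sup>+ x. F M x \<partial>Leb)" for M
  proof -
    have "ennreal (s M) = (\<Sum>k\<in>KM M. ennreal (ak p \<mu> n r k))"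
      unfolding s_def by (rule sum_ennreal[symmetric]) (simp add: ak_def)
    also have "\<dots> = (\<Sum>k\<in>KM M. \<integral>\<^sup>+ x. indicator (cube k) x * gQ p \<mu> n r x \<partial>Leb)"
      by (simp add: ak_nn[OF \<mu>])
    also have "\<dots> = (\<integral>\<^sup>+ x. (\<Sum>k\<in>KM M. indicator (cube k) x * gQ p \<mu> n r x) \<partial>Leb)"
      by (rule nn_integral_sum[symmetric]) (use cube_sets in measurable)
    also have "\<dots> = (\<integral>\<^sup>+ x. F M x \<partial>Leb)" unfolding F_def by (simp add: sum_distrib_right)
    finally show ?thesis .
  qed
  have "(\<lambda>M. \<integral>\<^sup>+ x. F M x \<partial>Leb) \<longlonglongrightarrow> (SUP M. \<integral>\<^sup>+ x. F M x \<partial>Leb)"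
    by (rule LIMSEQ_SUP) (auto simp: incseq_def F_if intro!: nn_integral_mono)
  also have "(SUP M. \<integral>\<^sup>+ x. F M x \<partial>Leb) = (\<integral>\<^sup>+ x. (SUP M. F M x) \<partial>Leb)"
    by (rule nn_integral_monotone_convergence_SUP[symmetric, OF Finc Fm])
  also have "\<dots> = HQ p \<mu> n r TYPE('d)" by (simp add: Fsup HQ_gQ)
  finally have "(\<lambda>M. ennreal (s M)) \<longlonglongrightarrow> HQ p \<mu> n r TYPE('d)" by (simp add: sF)
  then have "(\<lambda>M. exp (- s M)) \<longlonglongrightarrow> exp_neg_ennreal (HQ p \<mu> n r TYPE('d))"
    by (rule exp_neg_lim[OF s_nn])
  then have "(\<lambda>M. measure ?P (G M)) \<longlonglongrightarrow> exp_neg_ennreal (HQ p \<mu> n r TYPE('d))" by (simp add: mG)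
  with lim1 show ?thesis by (rule LIMSEQ_unique)
qed



definition MA :: "((int^'d::finite) \<Rightarrow> nat) measure" where
  "MA = PiM UNIV (\<lambda>k. measure_pmf (poisson_pmf 1))"
definition MX :: "nat pmf \<Rightarrow> (((int^'d::finite) \<times> nat \<times> nat list) \<Rightarrow> nat) measure" where
  "MX p = PiM UNIV (\<lambda>a. measure_pmf p)"
definition MU :: "(((int^'d::finite) \<times> nat \<times> 'd) \<Rightarrow> real) measure" where
  "MU = PiM UNIV (\<lambda>a. case a of (k, j, i) \<Rightarrow> uniform_measure lborel {real_of_int (k$i) ..< real_of_int (k$i) + 1})"
definition MD :: "real measure \<Rightarrow> (((int^'d::finite) \<times> nat \<times> nat list \<times> 'd) \<Rightarrow> real) measure" where
  "MD \<mu> = PiM UNIV (\<lambda>a. \<mu>)"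

lemma brw_space_eq: "brw_space p \<mu> = MA \<Otimes>\<^sub>M (MX p \<Otimes>\<^sub>M (MU \<Otimes>\<^sub>M MD \<mu>))"
  by (simp add: brw_space_def MA_def MX_def MU_def MD_def)

lemma MU_comp: "(case a of (k, j, i) \<Rightarrow> uniform_measure lborel {real_of_int (k$i) ..< real_of_int (k$i) + 1})
   = unif (real_of_int (fst a $ snd (snd a)))"
  by (cases a) (simp add: unif_def)

definition enc :: "('d::finite) brw_outcome \<Rightarrow> 'd atom \<Rightarrow> real" where
  "enc \<omega> a = (case a of Inl k \<Rightarrow> real (fst \<omega> k)
     | Inr ((k,j), Inl i) \<Rightarrow> fst (snd (snd \<omega>)) (k,j,i)
     | Inr ((k,j), Inr (Inl w)) \<Rightarrow> real (fst (snd \<omega>) (k,j,w))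
     | Inr ((k,j), Inr (Inr (w,i))) \<Rightarrow> snd (snd (snd \<omega>)) (k,j,w,i))"

lemma enc_simps[simp]:
  "enc \<omega> (Inl k) = real (fst \<omega> k)"
  "enc \<omega> (Inr ((k,j), Inl i)) = fst (snd (snd \<omega>)) (k,j,i)"
  "enc \<omega> (Inr ((k,j), Inr (Inl w))) = real (fst (snd \<omega>) (k,j,w))"
  "enc \<omega> (Inr ((k,j), Inr (Inr (w,i)))) = snd (snd (snd \<omega>)) (k,j,w,i)"
  by (simp_all add: enc_def)

context
  fixes p :: "nat pmf" and \<mu> :: "real measure"
  assumes \<mu>b: "sets \<mu> = sets borel"
begin

abbreviation "\<Omega> \<equiv> (brw_space p \<mu> :: ('d::finite) brw_outcome measure)"

lemma mN: "(\<lambda>\<omega>. fst \<omega> k) \<in> (\<Omega> :: 'd::finite brw_outcome measure) \<rightarrow>\<^sub>M count_space UNIV"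
proof -
  have "(\<lambda>\<omega>. fst \<omega> k) \<in> (\<Omega> :: 'd brw_outcome measure) \<rightarrow>\<^sub>M measure_pmf (poisson_pmf 1)"
    unfolding brw_space_eq MA_def by measurable
  then show ?thesis by (simp add: measurable_cong_sets[OF refl sets_measure_pmf_count_space])
qed

lemma mX: "(\<lambda>\<omega>. fst (snd \<omega>) a) \<in> (\<Omega> :: 'd::finite brw_outcome measure) \<rightarrow>\<^sub>M count_space UNIV"
proof -
  have "(\<lambda>\<omega>. fst (snd \<omega>) a) \<in> (\<Omega> :: 'd brw_outcome measure) \<rightarrow>\<^sub>M measure_pmf p"
    unfolding brw_space_eq MX_def by measurable
  then show ?thesis by (simp add: measurable_cong_sets[OF refl sets_measure_pmf_count_space])
qed

lemma mU: "(\<lambda>\<omega>. fst (snd (snd \<omega>)) a) \<in> borel_measurable (\<Omega> :: 'd::finite brw_outcome measure)"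
proof -
  have "(\<lambda>\<omega>. fst (snd (snd \<omega>)) a) \<in> (\<Omega> :: 'd brw_outcome measure) \<rightarrow>\<^sub>M
     (case a of (k, j, i) \<Rightarrow> uniform_measure lborel {real_of_int (k$i) ..< real_of_int (k$i) + 1})"
    unfolding brw_space_eq MU_def by measurable
  then show ?thesis by (rule meas_borel_cong) (simp add: MU_comp)
qed

lemma mD: "(\<lambda>\<omega>. snd (snd (snd \<omega>)) a) \<in> borel_measurable (\<Omega> :: 'd::finite brw_outcome measure)"
proof -
  have "(\<lambda>\<omega>. snd (snd (snd \<omega>)) a) \<in> (\<Omega> :: 'd brw_outcome measure) \<rightarrow>\<^sub>M \<mu>"
    unfolding brw_space_eq MD_def by measurable
  then show ?thesis by (rule meas_borel_cong) (rule \<mu>b)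
qed

lemma enc_meas: "enc \<in> (\<Omega> :: 'd::finite brw_outcome measure) \<rightarrow>\<^sub>M Pm p \<mu>"
  unfolding Pm_def
proof (rule measurable_PiM_single')
  fix a :: "'d atom"
  have "(\<lambda>\<omega>. enc \<omega> a) \<in> borel_measurable (\<Omega> :: 'd brw_outcome measure)"
  proof (cases a)
    case (Inl k)
    have [measurable]: "(\<lambda>\<omega>. fst \<omega> k) \<in> (\<Omega> :: 'd brw_outcome measure) \<rightarrow>\<^sub>M count_space UNIV" by (rule mN)
    show ?thesis unfolding Inl by simp measurable
  next
    case (Inr y)
    then obtain k j b where y: "a = Inr ((k,j),b)" by (metis prod.collapse)
    show ?thesis
    proof (cases b)
      case (Inl i) then show ?thesis using mU[of "(k,j,i)"] by (simp add: y)
    next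
      case (Inr c)
      show ?thesis
      proof (cases c)
        case (Inl w)
        have [measurable]: "(\<lambda>\<omega>. fst (snd \<omega>) (k,j,w)) \<in> (\<Omega> :: 'd brw_outcome measure) \<rightarrow>\<^sub>M count_space UNIV" by (rule mX)
        show ?thesis unfolding y Inr Inl by simp measurable
      next
        case (Inr wi)
        then obtain w i where "c = Inr (w,i)" by (metis prod.collapse)
        then show ?thesis using mD[of "(k,j,w,i)"] by (simp add: y \<open>b = Inr c\<close>)
      qed
    qed
  qed
  moreover have "sets (nu p \<mu> a) = sets borel" by (rule sets_nu[OF \<mu>b])
  ultimately show "(\<lambda>\<omega>. enc \<omega> a) \<in> (\<Omega> :: 'd brw_outcome measure) \<rightarrow>\<^sub>M nu p \<mu> a"
    using measurable_cong_sets[OF refl, of "nu p \<mu> a" borel] by simp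
qed (use \<mu>b in \<open>auto simp: space_nu\<close>)

end



lemma PiM_box:
  assumes M: "\<And>i. prob_space (M i)" and J: "finite J" and X: "\<And>i. i \<in> J \<Longrightarrow> X i \<in> sets (M i)"
  shows "{x \<in> space (PiM UNIV M). \<forall>i\<in>J. x i \<in> X i} \<in> sets (PiM UNIV M)"
    and "emeasure (PiM UNIV M) {x \<in> space (PiM UNIV M). \<forall>i\<in>J. x i \<in> X i} = (\<Prod>i\<in>J. emeasure (M i) (X i))"
proof -
  interpret product_prob_space M UNIV using pps_UNIV[OF M] .
  have eq: "{x \<in> space (PiM UNIV M). \<forall>i\<in>J. x i \<in> X i} = prod_emb UNIV M J (Pi\<^sub>E J X)"
    unfolding prod_emb_def using X by (auto simp: space_PiM Pi_iff PiE_iff)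
  show "{x \<in> space (PiM UNIV M). \<forall>i\<in>J. x i \<in> X i} \<in> sets (PiM UNIV M)"
    unfolding eq using J X by (intro sets_PiM_I) auto
  show "emeasure (PiM UNIV M) {x \<in> space (PiM UNIV M). \<forall>i\<in>J. x i \<in> X i} = (\<Prod>i\<in>J. emeasure (M i) (X i))"
    using J X by (intro emeasure_PiM_Collect) auto
qed

lemma emeasure_PR: "A \<in> sets borel \<Longrightarrow> emeasure (PR q) A = emeasure (measure_pmf q) {n. real n \<in> A}"
  unfolding PR_def by (subst emeasure_distr) (auto intro!: arg_cong2[where f=emeasure])

definition G2 :: "(int^'d::finite) \<times> nat \<times> nat list \<Rightarrow> 'd atom" where
  "G2 = (\<lambda>(k,j,w). Inr ((k,j), Inr (Inl w)))"
definition G3 :: "(int^'d::finite) \<times> nat \<times> 'd \<Rightarrow> 'd atom" where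
  "G3 = (\<lambda>(k,j,i). Inr ((k,j), Inl i))"
definition G4 :: "(int^'d::finite) \<times> nat \<times> nat list \<times> 'd \<Rightarrow> 'd atom" where
  "G4 = (\<lambda>(k,j,w,i). Inr ((k,j), Inr (Inr (w,i))))"

lemma G_simps[simp]: "G2 (k,j,w) = Inr ((k,j), Inr (Inl w))" "G3 (k,j,i) = Inr ((k,j), Inl i)"
  "G4 (k,j,w,i) = Inr ((k,j), Inr (Inr (w,i)))"
  by (simp_all add: G2_def G3_def G4_def)

lemma prod_split4:
  fixes h :: "('d::finite) atom \<Rightarrow> ennreal" and J :: "'d atom set"
  assumes J: "finite J"
  shows "(\<Prod>a\<in>J. h a) = (\<Prod>k\<in>Inl -` J. h (Inl k)) * ((\<Prod>x\<in>G2 -` J. h (G2 x)) * ((\<Prod>x\<in>G3 -` J. h (G3 x)) * (\<Prod>x\<in>G4 -` J. h (G4 x))))"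
proof -
  have inj2: "inj G2" and inj3: "inj G3" and inj4: "inj G4"
    by (auto simp: inj_def G2_def G3_def G4_def)
  have Jeq: "J = Inl ` (Inl -` J) \<union> (G2 ` (G2 -` J) \<union> (G3 ` (G3 -` J) \<union> G4 ` (G4 -` J)))"
  proof
    show "J \<subseteq> Inl ` (Inl -` J) \<union> (G2 ` (G2 -` J) \<union> (G3 ` (G3 -` J) \<union> G4 ` (G4 -` J)))"
    proof
      fix a assume a: "a \<in> J"
      show "a \<in> Inl ` (Inl -` J) \<union> (G2 ` (G2 -` J) \<union> (G3 ` (G3 -` J) \<union> G4 ` (G4 -` J)))"
      proof (cases a)
        case (Inl k) then show ?thesis using a by auto
      next
        case (Inr y)
        then obtain k j b where y: "a = Inr ((k,j),b)" by (metis prod.collapse)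
        show ?thesis
        proof (cases b)
          case (Inl i)
          then have "a = G3 (k,j,i)" by (simp add: y G3_def)
          then show ?thesis using a by blast
        next
          case (Inr c)
          show ?thesis
          proof (cases c)
            case (Inl w)
            then have "a = G2 (k,j,w)" by (simp add: y G2_def \<open>b = Inr c\<close>)
            then show ?thesis using a by blast
          next
            case (Inr wi)
            then obtain w i where "c = Inr (w,i)" by (metis prod.collapse)
            then have "a = G4 (k,j,w,i)" by (simp add: y G4_def \<open>b = Inr c\<close>)
            then show ?thesis using a by blast
          qed
        qed
      qed
    qed
  qed auto
  have fin1: "finite (Inl -` J)" using J by (intro finite_vimageI) auto
  have fin2: "finite (G2 -` J)" using J inj2 by (intro finite_vimageI)
  have fin3: "finite (G3 -` J)" using J inj3 by (intro finite_vimageI)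
  have fin4: "finite (G4 -` J)" using J inj4 by (intro finite_vimageI)
  have d1: "Inl ` (Inl -` J) \<inter> (G2 ` (G2 -` J) \<union> (G3 ` (G3 -` J) \<union> G4 ` (G4 -` J))) = {}"
    by (auto simp: G2_def G3_def G4_def)
  have d2: "G2 ` (G2 -` J) \<inter> (G3 ` (G3 -` J) \<union> G4 ` (G4 -` J)) = {}"
    by (auto simp: G2_def G3_def G4_def)
  have d3: "G3 ` (G3 -` J) \<inter> G4 ` (G4 -` J) = {}"
    by (auto simp: G2_def G3_def G4_def)
  define T1 :: "'d atom set" where "T1 = Inl ` (Inl -` J)"
  define T2 where "T2 = G2 ` (G2 -` J)"
  define T3 where "T3 = G3 ` (G3 -` J)"
  define T4 where "T4 = G4 ` (G4 -` J)"
  have f1: "finite T1" unfolding T1_def by (rule finite_imageI[OF fin1])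
  have f2: "finite T2" unfolding T2_def by (rule finite_imageI[OF fin2])
  have f3: "finite T3" unfolding T3_def by (rule finite_imageI[OF fin3])
  have f4: "finite T4" unfolding T4_def by (rule finite_imageI[OF fin4])
  have "(\<Prod>a\<in>J. h a) = prod h (T1 \<union> (T2 \<union> (T3 \<union> T4)))"
    using Jeq unfolding T1_def T2_def T3_def T4_def by simp
  also have "\<dots> = prod h T1 * prod h (T2 \<union> (T3 \<union> T4))"
    by (rule prod.union_disjoint) (use f1 f2 f3 f4 d1 in \<open>simp_all only: T1_def T2_def T3_def T4_def finite_Un\<close>)
  also have "prod h (T2 \<union> (T3 \<union> T4)) = prod h T2 * prod h (T3 \<union> T4)"
    by (rule prod.union_disjoint) (use f1 f2 f3 f4 d2 in \<open>simp_all only: T1_def T2_def T3_def T4_def finite_Un\<close>)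
  also have "prod h (T3 \<union> T4) = prod h T3 * prod h T4"
    by (rule prod.union_disjoint) (use f1 f2 f3 f4 d3 in \<open>simp_all only: T1_def T2_def T3_def T4_def finite_Un\<close>)
  finally have "(\<Prod>a\<in>J. h a) = (\<Prod>a\<in>Inl ` (Inl -` J). h a) * ((\<Prod>a\<in>G2 ` (G2 -` J). h a) * ((\<Prod>a\<in>G3 ` (G3 -` J). h a) * (\<Prod>a\<in>G4 ` (G4 -` J). h a)))"
    unfolding T1_def T2_def T3_def T4_def .
  also have "(\<Prod>a\<in>Inl ` (Inl -` J). h a) = (\<Prod>k\<in>Inl -` J. h (Inl k))"
    by (rule prod.reindex_cong[where l=Inl]) (auto simp: inj_on_def)
  also have "(\<Prod>a\<in>G2 ` (G2 -` J). h a) = (\<Prod>x\<in>G2 -` J. h (G2 x))"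
    by (rule prod.reindex_cong[where l=G2]) (use inj2 in \<open>auto intro: inj_on_subset\<close>)
  also have "(\<Prod>a\<in>G3 ` (G3 -` J). h a) = (\<Prod>x\<in>G3 -` J. h (G3 x))"
    by (rule prod.reindex_cong[where l=G3]) (use inj3 in \<open>auto intro: inj_on_subset\<close>)
  also have "(\<Prod>a\<in>G4 ` (G4 -` J). h a) = (\<Prod>x\<in>G4 -` J. h (G4 x))"
    by (rule prod.reindex_cong[where l=G4]) (use inj4 in \<open>auto intro: inj_on_subset\<close>)
  finally show ?thesis .
qed



lemma space_unif_lborel: "space (uniform_measure lborel A) = UNIV" by simp

lemma space_MA[simp]: "space MA = UNIV" by (auto simp: MA_def space_PiM)
lemma space_MX[simp]: "space (MX p) = UNIV" by (auto simp: MX_def space_PiM)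
lemma space_MU[simp]: "space MU = UNIV" by (auto simp: MU_def space_PiM split: prod.splits)
lemma space_MD[simp]: "sets \<mu> = sets borel \<Longrightarrow> space (MD \<mu>) = UNIV"
  using sets_eq_imp_space_eq[of \<mu> borel] by (auto simp: MD_def space_PiM)

lemma space_brw: "sets \<mu> = sets borel \<Longrightarrow> space (brw_space p \<mu>) = UNIV"
  by (simp add: brw_space_eq space_pair_measure)

lemma prob_MA: "prob_space MA" unfolding MA_def by (rule prob_space_PiM) (simp add: measure_pmf.prob_space_axioms)
lemma prob_MX: "prob_space (MX p)" unfolding MX_def by (rule prob_space_PiM) (simp add: measure_pmf.prob_space_axioms)
lemma prob_MU_comp: "prob_space (case a of (k, j, i) \<Rightarrow> uniform_measure lborel {real_of_int (k$i) ..< real_of_int (k$i) + 1})"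
  by (simp add: MU_comp prob_unif[unfolded unif_def] unif_def)
lemma prob_MU: "prob_space MU" unfolding MU_def by (rule prob_space_PiM) (rule prob_MU_comp)
lemma prob_MD: "prob_space \<mu> \<Longrightarrow> prob_space (MD \<mu>)" unfolding MD_def by (rule prob_space_PiM)

lemma atom_ball:
  "(\<forall>a\<in>J. P (a :: ('d::finite) atom)) \<longleftrightarrow> (\<forall>k\<in>Inl -` J. P (Inl k)) \<and> (\<forall>x\<in>G2 -` J. P (G2 x)) \<and>
     (\<forall>x\<in>G3 -` J. P (G3 x)) \<and> (\<forall>x\<in>G4 -` J. P (G4 x))"
proof safe
  fix a assume H: "\<forall>k\<in>Inl -` J. P (Inl k)" "\<forall>x\<in>G2 -` J. P (G2 x)" "\<forall>x\<in>G3 -` J. P (G3 x)" "\<forall>x\<in>G4 -` J. P (G4 x)"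
    and a: "a \<in> J"
  show "P a"
  proof (cases a)
    case (Inl k) then show ?thesis using H a by auto
  next
    case (Inr y)
    then obtain k j b where y: "a = Inr ((k,j),b)" by (metis prod.collapse)
    show ?thesis
    proof (cases b)
      case (Inl i) then have "a = G3 (k,j,i)" by (simp add: y)
      then show ?thesis using H a by (metis vimageI2)
    next
      case (Inr c)
      show ?thesis
      proof (cases c)
        case (Inl w) then have "a = G2 (k,j,w)" by (simp add: y \<open>b = Inr c\<close>)
        then show ?thesis using H a by (metis vimageI2)
      next
        case (Inr wi)
        then obtain w i where "c = Inr (w,i)" by (metis prod.collapse)
        then have "a = G4 (k,j,w,i)" by (simp add: y \<open>b = Inr c\<close>)
        then show ?thesis using H a by (metis vimageI2)
      qed
    qed
  qed
qed auto



lemma enc_G[simp]: "enc \<omega> (G2 x) = real (fst (snd \<omega>) x)" "enc \<omega> (G3 y) = fst (snd (snd \<omega>)) y"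
  "enc \<omega> (G4 z) = snd (snd (snd \<omega>)) z"
  by (cases x, simp, cases y, simp, cases z, simp)

lemma distr_enc:
  fixes \<mu> :: "real measure"
  assumes \<mu>: "prob_space \<mu>" "sets \<mu> = sets borel"
  shows "distr (brw_space p \<mu> :: ('d::finite) brw_outcome measure) (Pm p \<mu>) enc = Pm p \<mu>"
proof (rule measure_eqI_PiM_infinite[where I=UNIV and M="nu p \<mu>"])
  let ?\<Omega> = "brw_space p \<mu> :: 'd brw_outcome measure"
  have encm: "enc \<in> ?\<Omega> \<rightarrow>\<^sub>M Pm p \<mu>" by (rule enc_meas[OF \<mu>(2)])
  show "sets (distr ?\<Omega> (Pm p \<mu>) enc) = sets (PiM UNIV (nu p \<mu>))" by (simp add: Pm_def)
  show "sets (Pm p \<mu>) = sets (PiM UNIV (nu p \<mu>))" by (simp add: Pm_def)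
  interpret O: prob_space ?\<Omega>
    unfolding brw_space_eq using prob_MA prob_MX prob_MU prob_MD[OF \<mu>(1)]
    by (intro prob_space_pair) auto
  show "finite_measure (distr ?\<Omega> (Pm p \<mu>) enc)"
  proof -
    interpret D: prob_space "distr ?\<Omega> (Pm p \<mu>) enc" by (rule O.prob_space_distr[OF encm])
    show ?thesis by unfold_locales
  qed
  fix A and J :: "'d atom set"
  assume J: "finite J" "J \<subseteq> UNIV" and A: "\<And>i. i \<in> J \<Longrightarrow> A i \<in> sets (nu p \<mu> i)"
  have Ab: "\<And>i. i \<in> J \<Longrightarrow> A i \<in> sets borel" using A sets_nu[OF \<mu>(2)] by auto
  let ?E = "prod_emb UNIV (nu p \<mu>) J (Pi\<^sub>E J A)"
  have Em: "?E \<in> sets (Pm p \<mu>)" unfolding Pm_def using J A by (intro sets_PiM_I) auto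
  have rhs: "emeasure (Pm p \<mu>) ?E = (\<Prod>j\<in>J. emeasure (nu p \<mu> j) (A j))"
    unfolding Pm_def using J A prob_nu[OF \<mu>(1)] by (intro emeasure_PiM_emb) auto
  define S1 where "S1 = {x \<in> space MA. \<forall>k\<in>Inl -` J. x k \<in> {n. real n \<in> A (Inl k)}}"
  define S2 where "S2 = {x \<in> space (MX p). \<forall>a\<in>G2 -` J. x a \<in> {n. real n \<in> A (G2 a)}}"
  define S3 where "S3 = {x \<in> space MU. \<forall>a\<in>G3 -` J. x a \<in> A (G3 a)}"
  define S4 where "S4 = {x \<in> space (MD \<mu>). \<forall>a\<in>G4 -` J. x a \<in> A (G4 a)}"
  have fin1: "finite (Inl -` J :: (int^'d) set)" using J by (intro finite_vimageI) auto
  have fin2: "finite (G2 -` J :: ((int^'d) \<times> nat \<times> nat list) set)" using J by (intro finite_vimageI) (auto simp: inj_def G2_def)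
  have fin3: "finite (G3 -` J :: ((int^'d) \<times> nat \<times> 'd) set)" using J by (intro finite_vimageI) (auto simp: inj_def G3_def)
  have fin4: "finite (G4 -` J :: ((int^'d) \<times> nat \<times> nat list \<times> 'd) set)" using J by (intro finite_vimageI) (auto simp: inj_def G4_def)
  have b1: "S1 \<in> sets MA" and e1: "emeasure MA S1 = (\<Prod>k\<in>Inl -` J. emeasure (measure_pmf (poisson_pmf 1)) {n. real n \<in> A (Inl k)})"
    unfolding S1_def MA_def using PiM_box[OF _ fin1, of "\<lambda>_. measure_pmf (poisson_pmf 1)" "\<lambda>k. {n. real n \<in> A (Inl k)}"]
    by (simp_all add: measure_pmf.prob_space_axioms)
  have b2: "S2 \<in> sets (MX p)" and e2: "emeasure (MX p) S2 = (\<Prod>a\<in>G2 -` J. emeasure (measure_pmf p) {n. real n \<in> A (G2 a)})"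
    unfolding S2_def MX_def using PiM_box[OF _ fin2, of "\<lambda>_. measure_pmf p" "\<lambda>a. {n. real n \<in> A (G2 a)}"]
    by (simp_all add: measure_pmf.prob_space_axioms)
  have b3: "S3 \<in> sets MU" and e3: "emeasure MU S3 = (\<Prod>a\<in>G3 -` J. emeasure (unif (real_of_int (fst a $ snd (snd a)))) (A (G3 a)))"
  proof -
    have MUe: "MU = PiM UNIV (\<lambda>a::(int^'d) \<times> nat \<times> 'd. unif (real_of_int (fst a $ snd (snd a))))"
      unfolding MU_def by (intro PiM_cong refl) (simp add: MU_comp)
    have X3: "A (G3 a) \<in> sets (unif (real_of_int (fst a $ snd (snd a))))" if "a \<in> G3 -` J" for a
      using Ab[of "G3 a"] that by simp
    note pb = PiM_box[where M="\<lambda>a::(int^'d) \<times> nat \<times> 'd. unif (real_of_int (fst a $ snd (snd a)))"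
        and J="G3 -` J" and X="\<lambda>a. A (G3 a)", OF prob_unif fin3 X3]
    show "S3 \<in> sets MU" "emeasure MU S3 = (\<Prod>a\<in>G3 -` J. emeasure (unif (real_of_int (fst a $ snd (snd a)))) (A (G3 a)))"
      unfolding S3_def MUe using pb by auto
  qed
  have b4: "S4 \<in> sets (MD \<mu>)" and e4: "emeasure (MD \<mu>) S4 = (\<Prod>a\<in>G4 -` J. emeasure \<mu> (A (G4 a)))"
  proof -
    have "A (G4 a) \<in> sets \<mu>" if "a \<in> G4 -` J" for a using Ab[of "G4 a"] that \<mu>(2) by simp
    then show "S4 \<in> sets (MD \<mu>)" "emeasure (MD \<mu>) S4 = (\<Prod>a\<in>G4 -` J. emeasure \<mu> (A (G4 a)))"
      unfolding S4_def MD_def using PiM_box[OF \<mu>(1) fin4, of "\<lambda>a. A (G4 a)"] by simp_all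
  qed
  have pre: "enc -` ?E \<inter> space ?\<Omega> = S1 \<times> (S2 \<times> (S3 \<times> S4))"
  proof -
    have "enc -` ?E \<inter> space ?\<Omega> = {\<omega>. \<forall>j\<in>J. enc \<omega> j \<in> A j}"
      using \<mu>(2) by (auto simp: space_brw prod_emb_iff PiE_iff space_nu restrict_def extensional_def)
    also have "\<dots> = S1 \<times> (S2 \<times> (S3 \<times> S4))"
      unfolding atom_ball using \<mu>(2) by (auto simp: S1_def S2_def S3_def S4_def simp del: G_simps)
    finally show ?thesis .
  qed
  interpret MD: prob_space "MD \<mu>" by (rule prob_MD[OF \<mu>(1)])
  interpret MU: prob_space MU by (rule prob_MU)
  interpret UD: prob_space "MU \<Otimes>\<^sub>M MD \<mu>" by (intro prob_space_pair) unfold_locales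
  interpret MX: prob_space "MX p" by (rule prob_MX)
  interpret XUD: prob_space "MX p \<Otimes>\<^sub>M (MU \<Otimes>\<^sub>M MD \<mu>)" by (intro prob_space_pair) unfold_locales
  have "emeasure (distr ?\<Omega> (Pm p \<mu>) enc) ?E = emeasure ?\<Omega> (enc -` ?E \<inter> space ?\<Omega>)"
    using encm Em by (rule emeasure_distr)
  also have "\<dots> = emeasure ?\<Omega> (S1 \<times> (S2 \<times> (S3 \<times> S4)))" using pre by simp
  also have "\<dots> = emeasure MA S1 * (emeasure (MX p) S2 * (emeasure MU S3 * emeasure (MD \<mu>) S4))"
    unfolding brw_space_eq using b1 b2 b3 b4
    by (simp add: XUD.emeasure_pair_measure_Times UD.emeasure_pair_measure_Times MD.emeasure_pair_measure_Times)
  also have "\<dots> = (\<Prod>j\<in>J. emeasure (nu p \<mu> j) (A j))"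
  proof -
    have "(\<Prod>j\<in>J. emeasure (nu p \<mu> j) (A j)) = (\<Prod>k\<in>Inl -` J. emeasure (nu p \<mu> (Inl k)) (A (Inl k))) *
       ((\<Prod>x\<in>G2 -` J. emeasure (nu p \<mu> (G2 x)) (A (G2 x))) * ((\<Prod>x\<in>G3 -` J. emeasure (nu p \<mu> (G3 x)) (A (G3 x))) *
       (\<Prod>x\<in>G4 -` J. emeasure (nu p \<mu> (G4 x)) (A (G4 x)))))"
      by (rule prod_split4[OF J(1)])
    also have "(\<Prod>k\<in>Inl -` J. emeasure (nu p \<mu> (Inl k)) (A (Inl k))) = emeasure MA S1"
      unfolding e1 using Ab by (intro prod.cong refl) (simp add: emeasure_PR)
    also have "(\<Prod>x\<in>G2 -` J. emeasure (nu p \<mu> (G2 x)) (A (G2 x))) = emeasure (MX p) S2"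
      unfolding e2 using Ab by (intro prod.cong refl) (auto simp: emeasure_PR G2_def nuF_def nuT_def)
    also have "(\<Prod>x\<in>G3 -` J. emeasure (nu p \<mu> (G3 x)) (A (G3 x))) = emeasure MU S3"
      unfolding e3 by (intro prod.cong refl) (auto simp: G3_def nuF_def)
    also have "(\<Prod>x\<in>G4 -` J. emeasure (nu p \<mu> (G4 x)) (A (G4 x))) = emeasure (MD \<mu>) S4"
      unfolding e4 by (intro prod.cong refl) (auto simp: G4_def nuF_def nuT_def)
    finally show ?thesis by simp
  qed
  finally show "emeasure (distr ?\<Omega> (Pm p \<mu>) enc) ?E = emeasure (Pm p \<mu>) ?E" using rhs by simp
qed



lemma norm_lt_iff:
  fixes v :: "real^'d::finite"
  assumes r: "0 < r"
  shows "norm v < r \<longleftrightarrow> (\<Sum>i\<in>UNIV. (v$i)^2) < r^2"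
proof -
  have "norm v = sqrt (\<Sum>i\<in>UNIV. (v$i)^2)" by (simp add: norm_vec_def L2_set_def)
  moreover have "r = sqrt (r^2)" using r by simp
  ultimately have "norm v < r \<longleftrightarrow> sqrt (\<Sum>i\<in>UNIV. (v$i)^2) < sqrt (r^2)" by metis
  then show ?thesis by (simp only: real_sqrt_less_iff)
qed

definition Occ :: "nat \<Rightarrow> ('d::finite) brw_outcome \<Rightarrow> real \<Rightarrow> bool" where
  "Occ n \<omega> u \<longleftrightarrow> (\<exists>k j w. brw_alive \<omega> k j w \<and> length w = n \<and> norm (brw_pos \<omega> k j w) < u)"

lemma Z_zero_iff: "brw_Z n \<omega> (ball 0 u) = 0 \<longleftrightarrow> \<not> Occ n \<omega> u"
proof -
  let ?S = "{(k, j, w). brw_alive \<omega> k j w \<and> length w = n \<and> brw_pos \<omega> k j w \<in> ball 0 u}"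
  have "brw_Z n \<omega> (ball 0 u) = 0 \<longleftrightarrow> ?S = {}"
  proof (cases "finite ?S")
    case True then show ?thesis unfolding brw_Z_def Let_def by (simp add: zero_enat_def)
  next
    case False
    then have "?S \<noteq> {}" by (metis finite.emptyI)
    then show ?thesis using False unfolding brw_Z_def Let_def by simp
  qed
  also have "?S = {} \<longleftrightarrow> \<not> Occ n \<omega> u" by (auto simp: Occ_def)
  finally show ?thesis .
qed

lemma R_ge_iff:
  assumes r: "0 < r"
  shows "brw_R n \<omega> \<ge> ereal r \<longleftrightarrow> \<not> Occ n \<omega> r"
proof
  assume "\<not> Occ n \<omega> r"
  then have "ereal r \<in> {0} \<union> {ereal u | u. u > 0 \<and> brw_Z n \<omega> (ball 0 u) = 0}"
    using r by (auto simp: Z_zero_iff)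
  then show "brw_R n \<omega> \<ge> ereal r" unfolding brw_R_def by (rule Sup_upper)
next
  assume ge: "brw_R n \<omega> \<ge> ereal r"
  show "\<not> Occ n \<omega> r"
  proof
    assume "Occ n \<omega> r"
    then obtain k j w where kjw: "brw_alive \<omega> k j w" "length w = n" "norm (brw_pos \<omega> k j w) < r"
      unfolding Occ_def by blast
    let ?q = "norm (brw_pos \<omega> k j w)"
    have "brw_R n \<omega> \<le> ereal ?q"
      unfolding brw_R_def
    proof (rule Sup_least)
      fix x assume "x \<in> {0} \<union> {ereal u | u. u > 0 \<and> brw_Z n \<omega> (ball 0 u) = 0}"
      then show "x \<le> ereal ?q"
      proof
        assume "x \<in> {0}" then show ?thesis by simp
      next
        assume "x \<in> {ereal u | u. u > 0 \<and> brw_Z n \<omega> (ball 0 u) = 0}"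
        then obtain u where u: "x = ereal u" "\<not> Occ n \<omega> u" by (auto simp: Z_zero_iff)
        have "u \<le> ?q"
        proof (rule ccontr)
          assume "\<not> u \<le> ?q"
          then have "Occ n \<omega> u" using kjw unfolding Occ_def by force
          then show False using u by simp
        qed
        then show ?thesis using u by simp
      qed
    qed
    then have "ereal r \<le> ereal ?q" using ge by (rule order_trans[rotated])
    then show False using kjw(3) by simp
  qed
qed

lemma Occ_iff_CG:
  assumes r: "0 < r"
  shows "\<not> Occ n \<omega> r \<longleftrightarrow> (\<forall>k. CG n r k (enc \<omega>))"
proof -
  obtain N xi U D where \<omega>: "\<omega> = (N, xi, U, D)" by (metis prod.collapse)
  have tal: "talive (\<lambda>b. enc \<omega> (Inr ((k,j), Inr b))) w \<longleftrightarrow> (\<forall>t<length w. w ! t < xi (k, j, take t w))" for k j w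
    by (simp add: talive_def txi_def \<omega>)
  have pos: "brw_pos \<omega> k j w $ i = U (k,j,i) + disp (\<lambda>b. enc \<omega> (Inr ((k,j), Inr b))) w i" for k j w i
    by (simp add: brw_pos_def disp_def \<omega>)
  have hit_iff: "FHit n r (\<lambda>b. enc \<omega> (Inr ((k,j), b))) \<longleftrightarrow>
     (\<exists>w. length w = n \<and> (\<forall>t<length w. w ! t < xi (k, j, take t w)) \<and> norm (brw_pos \<omega> k j w) < r)" for k j
    unfolding FHit_def hit_def tal inball_def norm_lt_iff[OF r] pos by (simp add: \<omega>)
  show ?thesis
    unfolding CG_def hit_iff Occ_def brw_alive_def by (auto simp: \<omega>)
qed



lemma exp_neg_mono: "x \<le> y \<Longrightarrow> exp_neg_ennreal y \<le> exp_neg_ennreal x"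
proof (cases "y = \<infinity>")
  case True then show ?thesis by (simp add: exp_neg_ennreal_def)
next
  case False
  assume xy: "x \<le> y"
  then have "x \<noteq> \<infinity>" using False top.extremum_unique by fastforce
  moreover have "enn2real x \<le> enn2real y" using xy False by (intro enn2real_mono) (auto simp: top.not_eq_extremum)
  ultimately show ?thesis using False by (simp add: exp_neg_ennreal_def)
qed

lemma exp_neg_bounds: "0 \<le> exp_neg_ennreal x" "exp_neg_ennreal x \<le> 1"
  by (auto simp: exp_neg_ennreal_def)

lemma exp_neg_surj:
  assumes "0 \<le> L" "L \<le> 1"
  shows "\<exists>v. exp_neg_ennreal v = L"
proof (cases "L = 0")
  case True then show ?thesis by (intro exI[of _ \<infinity>]) (simp add: exp_neg_ennreal_def)
next
  case False
  then have L: "0 < L" using assms by simp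
  have "0 \<le> - ln L" using L assms by simp
  then have "exp_neg_ennreal (ennreal (- ln L)) = L" using L by (simp add: exp_neg_ennreal_def)
  then show ?thesis by blast
qed

lemma event_measure:
  fixes \<mu> :: "real measure"
  assumes \<mu>: "prob_space \<mu>" "sets \<mu> = sets borel" and r: "0 < r"
  shows "measure (brw_space p \<mu> :: ('d::finite) brw_outcome measure) {\<omega> \<in> space (brw_space p \<mu>). brw_R n \<omega> \<ge> ereal r}
     = exp_neg_ennreal (HQ p \<mu> n r TYPE('d))"
proof -
  let ?\<Omega> = "brw_space p \<mu> :: 'd brw_outcome measure" and ?P = "Pm p \<mu> :: ('d atom \<Rightarrow> real) measure"
  let ?G = "{f \<in> space ?P. \<forall>k. CG n r k f}"
  have encm: "enc \<in> ?\<Omega> \<rightarrow>\<^sub>M ?P" by (rule enc_meas[OF \<mu>(2)])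
  have CGm[measurable]: "Measurable.pred ?P (CG n r k)" for k
    unfolding Pm_def by (rule CG_meas[OF \<mu>(2)]) auto
  have Gm: "?G \<in> sets ?P" by measurable
  have "{\<omega> \<in> space ?\<Omega>. brw_R n \<omega> \<ge> ereal r} = enc -` ?G \<inter> space ?\<Omega>"
    using encm by (auto simp: R_ge_iff[OF r] Occ_iff_CG[OF r] dest: measurable_space)
  then have "measure ?\<Omega> {\<omega> \<in> space ?\<Omega>. brw_R n \<omega> \<ge> ereal r} = measure (distr ?\<Omega> ?P enc) ?G"
    using encm Gm by (simp add: measure_distr)
  also have "\<dots> = measure ?P ?G" by (simp add: distr_enc[OF \<mu>])
  also have "\<dots> = exp_neg_ennreal (HQ p \<mu> n r TYPE('d))" by (rule Good_measure[OF \<mu>])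
  finally show ?thesis .
qed

theorem proposition4p1:
  fixes p :: "nat pmf" and \<mu> :: "real measure"
    and d_type :: "'d::finite itself"
  assumes p0: "pmf p 0 < 1" and p1: "pmf p 1 < 1"
    and mean_le: "(\<integral>\<^sup>+ k. ennreal (real k) \<partial>measure_pmf p) \<le> 1"
    and mu_prob: "prob_space \<mu>" and mu_borel: "sets \<mu> = sets borel"
    and mu_int: "integrable \<mu> (\<lambda>x. x)" and mu_mean: "(\<integral>x. x \<partial>\<mu>) = 0"
  shows "\<exists>F :: real \<Rightarrow> ennreal. \<forall>r > 0.
           (\<lambda>n. measure (brw_space p \<mu> :: 'd brw_outcome measure)
                   {\<omega> \<in> space (brw_space p \<mu>). brw_R n \<omega> \<ge> ereal r})
           \<longlonglongrightarrow> exp_neg_ennreal (F r)"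
proof -
  have "\<forall>r. \<exists>v. 0 < r \<longrightarrow> (\<lambda>n. measure (brw_space p \<mu> :: 'd brw_outcome measure)
                   {\<omega> \<in> space (brw_space p \<mu>). brw_R n \<omega> \<ge> ereal r}) \<longlonglongrightarrow> exp_neg_ennreal v"
  proof
    fix r :: real
    show "\<exists>v. 0 < r \<longrightarrow> (\<lambda>n. measure (brw_space p \<mu> :: 'd brw_outcome measure)
                   {\<omega> \<in> space (brw_space p \<mu>). brw_R n \<omega> \<ge> ereal r}) \<longlonglongrightarrow> exp_neg_ennreal v"
    proof (cases "0 < r")
      case False then show ?thesis by simp
    next
      case r: True
      define X where "X n = exp_neg_ennreal (HQ p \<mu> n r TYPE('d))" for n
      have eq: "(\<lambda>n. measure (brw_space p \<mu> :: 'd brw_outcome measure)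
                   {\<omega> \<in> space (brw_space p \<mu>). brw_R n \<omega> \<ge> ereal r}) = X"
        using event_measure[where 'd='d, OF mu_prob mu_borel r] by (simp add: X_def fun_eq_iff)
      have inc: "incseq X"
        by (rule incseq_SucI) (simp add: X_def exp_neg_mono HQ_step[OF mu_prob mu_borel mean_le])
      have bdd: "bdd_above (range X)" by (rule bdd_aboveI[of _ 1]) (auto simp: X_def exp_neg_bounds)
      have lim: "X \<longlonglongrightarrow> (SUP n. X n)" by (rule LIMSEQ_incseq_SUP[OF bdd inc])
      have "0 \<le> (SUP n. X n)" using bdd by (rule cSUP_upper2[where x=0]) (auto simp: X_def exp_neg_bounds)
      moreover have "(SUP n. X n) \<le> 1" by (rule cSUP_least) (auto simp: X_def exp_neg_bounds)
      ultimately obtain v where v: "exp_neg_ennreal v = (SUP n. X n)" using exp_neg_surj by blast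
      have "X \<longlonglongrightarrow> exp_neg_ennreal v" using lim by (simp only: v)
      then show ?thesis using eq by (intro exI[of _ v]) simp
    qed
  qed
  then have "\<exists>F. \<forall>r. 0 < r \<longrightarrow> (\<lambda>n. measure (brw_space p \<mu> :: 'd brw_outcome measure)
                   {\<omega> \<in> space (brw_space p \<mu>). brw_R n \<omega> \<ge> ereal r}) \<longlonglongrightarrow> exp_neg_ennreal (F r)"
    by (rule choice)
  then show ?thesis by simp
qed


end
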